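(* Assume that each $q^k$ is entrywise nonnegative, transient and substochastic (Hypothesis RN). Let $\hat s\in S$, let $W\ge1$, and let $C_1,\dots,C_W\in\mathbb R$. If Program 1 is feasible, i.e. there exist nonnegative weights $\alpha^{\delta}$, $\delta\in\Delta$, with $\sum_{\delta}\alpha^{\delta}=1$ and $\sum_{\delta}\alpha^{\delta}V_w^{\delta}(\hat s)\ge C_w$ for $w=1,\dots,W$, then Program 2 is feasible, i.e. there exist nonnegative weights $\alpha^{\pi}$ indexed by the priority rules $\pi$ (rules keyed to some labeling) with $\sum_{\pi}\alpha^{\pi}=1$ and $\sum_{\pi}\alpha^{\pi}V_w^{\pi}(\hat s)\ge C_w$ for $w=1,\dots,W$.
   Context: There are $K$ bandits with pairwise disjoint finite nonempty state sets $N_1,\dots,N_K$; $N=N_1\cup\dots\cup N_K$. Bandit $k$ has transition rates $q(i,j)\ge0$ ($i,j\in N_k$) forming $q^k$; $q^k$ is substochastic if $\sum_{j\in N_k}q(i,j)\le1$ for all $i$, and transient if its powers tend to $0$ entrywise. There are $W+1$ reward types $w=0,1,\dots,W$: each state $i\in N$ has real rewards $r_w(i)$. A multi-state $s$ contains exactly one state $s_k$ of each $N_k$; $S$ is the set of multi-states; $s_{\setminus k}=s\setminus\{s_k\}$. $\Delta$ is the (finite) set of maps $\delta:S\to\{1,\dots,K\}$. For $\delta\in\Delta$: $Q^{\delta}(s,t)=q(s_{\delta(s)},j)$ if $t=s_{\setminus\delta(s)}\cup\{j\}$ with $j\in N_{\delta(s)}$, else $0$; $R_w^{\delta}(s)=r_w(s_{\delta(s)})$;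 $V_w^{\delta}=(I-Q^{\delta})^{-1}R_w^{\delta}$ (well defined since $Q^\delta$ is transient). A labeling is an injective $L:N\cup\{0\}\to\{1,\dots,|N|+1\}$ with $L(0)=|N|+1$; the priority rule keyed to $L$ is the $\pi\in\Delta$ with $\pi(s)=\arg\min_k L(s_k)$. *)

theory Defs
  imports Complex_Main "HOL-Library.FuncSet"
begin

text \<open>Bandit k (for k in {1..K}) has state set N k; states of all bandits live in one type 'a.
  A multi-state is represented extensionally as the function k \<mapsto> s_k on {1..K}.\<close>

definition multistates :: "nat \<Rightarrow> (nat \<Rightarrow> 'a set) \<Rightarrow> (nat \<Rightarrow> 'a) set" where
  "multistates K N = (\<Pi>\<^sub>E k\<in>{1..K}. N k)"

definition all_states :: "nat \<Rightarrow> (nat \<Rightarrow> 'a set) \<Rightarrow> 'a set" where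
  "all_states K N = (\<Union>k\<in>{1..K}. N k)"

fun mat_pow_on :: "'a set \<Rightarrow> ('a \<Rightarrow> 'a \<Rightarrow> real) \<Rightarrow> nat \<Rightarrow> 'a \<Rightarrow> 'a \<Rightarrow> real" where
  "mat_pow_on A q 0 i j = (if i = j then 1 else 0)"
| "mat_pow_on A q (Suc n) i j = (\<Sum>l\<in>A. q i l * mat_pow_on A q n l j)"

definition substochastic_on :: "'a set \<Rightarrow> ('a \<Rightarrow> 'a \<Rightarrow> real) \<Rightarrow> bool" where
  "substochastic_on A q \<longleftrightarrow> (\<forall>i\<in>A. (\<Sum>j\<in>A. q i j) \<le> 1)"

definition transient_on :: "'a set \<Rightarrow> ('a \<Rightarrow> 'a \<Rightarrow> real) \<Rightarrow> bool" where
  "transient_on A q \<longleftrightarrow> (\<forall>i\<in>A. \<forall>j\<in>A. (\<lambda>n. mat_pow_on A q n i j) \<longlonglongrightarrow> 0)"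

definition policies :: "nat \<Rightarrow> (nat \<Rightarrow> 'a set) \<Rightarrow> ((nat \<Rightarrow> 'a) \<Rightarrow> nat) set" where
  "policies K N = (multistates K N \<rightarrow>\<^sub>E {1..K})"

definition Qmat :: "(nat \<Rightarrow> 'a set) \<Rightarrow> ('a \<Rightarrow> 'a \<Rightarrow> real) \<Rightarrow> ((nat \<Rightarrow> 'a) \<Rightarrow> nat)
    \<Rightarrow> (nat \<Rightarrow> 'a) \<Rightarrow> (nat \<Rightarrow> 'a) \<Rightarrow> real" where
  "Qmat N q \<delta> s t =
     (if \<exists>j\<in>N (\<delta> s). t = s(\<delta> s := j) then q (s (\<delta> s)) (t (\<delta> s)) else 0)"

definition Rvec :: "(nat \<Rightarrow> 'a \<Rightarrow> real) \<Rightarrow> nat \<Rightarrow> ((nat \<Rightarrow> 'a) \<Rightarrow> nat) \<Rightarrow> (nat \<Rightarrow> 'a) \<Rightarrow> real" where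
  "Rvec r w \<delta> s = r w (s (\<delta> s))"

definition Vval :: "nat \<Rightarrow> (nat \<Rightarrow> 'a set) \<Rightarrow> ('a \<Rightarrow> 'a \<Rightarrow> real) \<Rightarrow> (nat \<Rightarrow> 'a \<Rightarrow> real)
    \<Rightarrow> nat \<Rightarrow> ((nat \<Rightarrow> 'a) \<Rightarrow> nat) \<Rightarrow> (nat \<Rightarrow> 'a) \<Rightarrow> real" where
  "Vval K N q r w \<delta> =
     (THE V. V \<in> extensional (multistates K N) \<and>
        (\<forall>s\<in>multistates K N.
            V s - (\<Sum>t\<in>multistates K N. Qmat N q \<delta> s t * V t) = Rvec r w \<delta> s))"

text \<open>Labelings: injective L on N \<union> {0} into {1..|N|+1} with L(0) = |N|+1; the extra state 0
  is represented by None, a genuine state i by Some i.\<close>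
definition labeling :: "nat \<Rightarrow> (nat \<Rightarrow> 'a set) \<Rightarrow> ('a option \<Rightarrow> nat) \<Rightarrow> bool" where
  "labeling K N L \<longleftrightarrow>
     inj_on L (insert None (Some ` all_states K N)) \<and>
     L ` (insert None (Some ` all_states K N)) \<subseteq> {1..card (all_states K N) + 1} \<and>
     L None = card (all_states K N) + 1"

definition priority_rule :: "nat \<Rightarrow> (nat \<Rightarrow> 'a set) \<Rightarrow> ('a option \<Rightarrow> nat) \<Rightarrow> (nat \<Rightarrow> 'a) \<Rightarrow> nat" where
  "priority_rule K N L = (\<lambda>s\<in>multistates K N.
      THE k. k \<in> {1..K} \<and> (\<forall>k'\<in>{1..K}. k' \<noteq> k \<longrightarrow> L (Some (s k)) < L (Some (s k'))))"

definition priority_rules :: "nat \<Rightarrow> (nat \<Rightarrow> 'a set) \<Rightarrow> ((nat \<Rightarrow> 'a) \<Rightarrow> nat) set" where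
  "priority_rules K N = {priority_rule K N L | L. labeling K N L}"

end

theory Submission
  imports Defs "Jordan_Normal_Form.Determinant" "HOL-Analysis.Function_Topology"
begin

lemma finite_linear_surj:
  fixes A :: "'b \<Rightarrow> 'b \<Rightarrow> real" and M :: "'b set"
  assumes fin: "finite M"
    and inj: "\<And>v. (\<forall>s\<in>M. (\<Sum>t\<in>M. A s t * v t) = 0) \<Longrightarrow> (\<forall>s\<in>M. v s = 0)"
  shows "\<exists>v. \<forall>s\<in>M. (\<Sum>t\<in>M. A s t * v t) = b s"
proof -
  define n where "n = card M"
  obtain e where e: "bij_betw e {0..<n} M" using ex_bij_betw_nat_finite[OF fin] n_def by blast
  define ei where "ei = inv_into {0..<n} e"
  have ei: "\<And>t. t \<in> M \<Longrightarrow> ei t < n \<and> e (ei t) = t"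
    using e unfolding ei_def bij_betw_def
    by (metis atLeastLessThan_iff f_inv_into_f inv_into_into)
  have eM: "\<And>i. i < n \<Longrightarrow> e i \<in> M" using e unfolding bij_betw_def by auto
  have eie: "\<And>i. i < n \<Longrightarrow> ei (e i) = i" using e unfolding ei_def bij_betw_def
    by (simp add: inv_into_f_f)
  have reidx: "\<And>f::'b \<Rightarrow> real. (\<Sum>t\<in>M. f t) = (\<Sum>j<n. f (e j))"
  proof -
    fix f :: "'b \<Rightarrow> real"
    have "(\<Sum>t\<in>M. f t) = (\<Sum>j\<in>{0..<n}. f (e j))"
      using sum.reindex_bij_betw[OF e, of f] by simp
    then show "(\<Sum>t\<in>M. f t) = (\<Sum>j<n. f (e j))" by (simp add: atLeast0LessThan)
  qed
  define Am where "Am = mat n n (\<lambda>(i,j). A (e i) (e j))"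
  have Am: "Am \<in> carrier_mat n n" unfolding Am_def by simp
  have mv: "\<And>v i. v \<in> carrier_vec n \<Longrightarrow> i < n \<Longrightarrow> (Am *\<^sub>v v) $ i = (\<Sum>j<n. A (e i) (e j) * v $ j)"
    unfolding Am_def by (simp add: mult_mat_vec_def scalar_prod_def atLeast0LessThan)
  have "det Am \<noteq> 0"
  proof
    assume "det Am = 0"
    then obtain v where v: "v \<in> carrier_vec n" "v \<noteq> 0\<^sub>v n" "Am *\<^sub>v v = 0\<^sub>v n"
      using det_0_iff_vec_prod_zero[OF Am] by blast
    define u where "u t = v $ (ei t)" for t
    have "\<forall>s\<in>M. (\<Sum>t\<in>M. A s t * u t) = 0"
    proof
      fix s assume s: "s \<in> M"
      have "(\<Sum>t\<in>M. A s t * u t) = (\<Sum>j<n. A (e (ei s)) (e j) * v $ j)"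
        unfolding reidx u_def using ei[OF s] eie by simp
      also have "\<dots> = (Am *\<^sub>v v) $ (ei s)" using mv[OF v(1)] ei[OF s] by simp
      also have "\<dots> = 0" using v(3) ei[OF s] by simp
      finally show "(\<Sum>t\<in>M. A s t * u t) = 0" .
    qed
    then have "\<forall>s\<in>M. u s = 0" by (rule inj)
    then have "\<forall>i<n. v $ i = 0" unfolding u_def using eM eie by metis
    then have "v = 0\<^sub>v n" using v(1) by (intro eq_vecI) auto
    with v(2) show False by simp
  qed
  then have "Am \<in> Units (ring_mat TYPE(real) n n)" by (rule det_non_zero_imp_unit[OF Am])
  then obtain B where B: "B \<in> carrier_mat n n" "Am * B = 1\<^sub>m n"
    unfolding Units_def ring_mat_def by auto
  define bv where "bv = vec n (\<lambda>i. b (e i))"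
  define x where "x = B *\<^sub>v bv"
  have x: "x \<in> carrier_vec n" unfolding x_def bv_def using B by simp
  have Ax: "Am *\<^sub>v x = bv" unfolding x_def using B Am
    by (metis assoc_mult_mat_vec bv_def one_mult_mat_vec vec_carrier)
  show ?thesis
  proof (intro exI ballI)
    fix s assume s: "s \<in> M"
    have "(\<Sum>t\<in>M. A s t * x $ (ei t)) = (\<Sum>j<n. A (e (ei s)) (e j) * x $ j)"
      unfolding reidx using ei[OF s] eie by simp
    also have "\<dots> = (Am *\<^sub>v x) $ (ei s)" using mv[OF x] ei[OF s] by simp
    also have "\<dots> = b s" using Ax ei[OF s] unfolding bv_def by simp
    finally show "(\<Sum>t\<in>M. A s t * x $ (ei t)) = b s" .
  qed
qed

definition noclosed :: "nat \<Rightarrow> (nat \<Rightarrow> 'a set) \<Rightarrow> ('a \<Rightarrow> 'a \<Rightarrow> real) \<Rightarrow> bool" where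
  "noclosed K N q \<longleftrightarrow> (\<forall>k\<in>{1..K}. \<forall>A. A \<subseteq> N k \<longrightarrow> A \<noteq> {} \<longrightarrow>
      \<not> (\<forall>x\<in>A. (\<Sum>j\<in>N k. q x j) = 1 \<and> (\<forall>j\<in>N k. 0 < q x j \<longrightarrow> j \<in> A)))"

definition hyp :: "nat \<Rightarrow> (nat \<Rightarrow> 'a set) \<Rightarrow> ('a \<Rightarrow> 'a \<Rightarrow> real) \<Rightarrow> bool" where
  "hyp K N q \<longleftrightarrow> (\<forall>k\<in>{1..K}. finite (N k) \<and> N k \<noteq> {}) \<and>
     (\<forall>k\<in>{1..K}. \<forall>k'\<in>{1..K}. k \<noteq> k' \<longrightarrow> N k \<inter> N k' = {}) \<and>
     (\<forall>k\<in>{1..K}. \<forall>i\<in>N k. \<forall>j\<in>N k. 0 \<le> q i j) \<and>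
     (\<forall>k\<in>{1..K}. substochastic_on (N k) q) \<and> noclosed K N q"

lemma transient_noclosed:
  assumes fin: "finite B" and tr: "transient_on B q"
    and A: "A \<subseteq> B" "A \<noteq> {}"
    and nn: "\<forall>i\<in>B. \<forall>j\<in>B. 0 \<le> q i j"
    and cl: "\<forall>x\<in>A. (\<Sum>j\<in>B. q x j) = 1 \<and> (\<forall>j\<in>B. 0 < q x j \<longrightarrow> j \<in> A)"
  shows False
proof -
  define f where "f n i = (\<Sum>j\<in>A. mat_pow_on B q n i j)" for n i
  have fA: "\<forall>i\<in>A. f n i = 1" for n
  proof (induction n)
    case 0
    show ?case
    proof
      fix i assume i: "i \<in> A"
      have "f 0 i = (\<Sum>j\<in>A. if i = j then 1 else 0)" unfolding f_def by simp
      also have "\<dots> = 1" using i finite_subset[OF A(1) fin] by simp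
      finally show "f 0 i = 1" .
    qed
  next
    case (Suc n)
    show ?case
    proof
      fix i assume i: "i \<in> A"
      have "f (Suc n) i = (\<Sum>j\<in>A. \<Sum>l\<in>B. q i l * mat_pow_on B q n l j)" unfolding f_def by simp
      also have "\<dots> = (\<Sum>l\<in>B. q i l * f n l)" unfolding f_def
        by (subst sum.swap) (simp add: sum_distrib_left)
      also have "\<dots> = (\<Sum>l\<in>B. q i l)"
      proof (rule sum.cong[OF refl])
        fix l assume l: "l \<in> B"
        show "q i l * f n l = q i l"
        proof (cases "l \<in> A")
          case True then show ?thesis using Suc by simp
        next
          case False
          have "q i l \<le> 0" using cl i l False by (meson not_less)
          then have "q i l = 0" using nn i l A by (meson antisym subsetD)
          then show ?thesis by simp
        qed
      qed
      also have "\<dots> = 1" using cl i by simp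
      finally show "f (Suc n) i = 1" .
    qed
  qed
  obtain i where i: "i \<in> A" using A by blast
  have "(\<lambda>n. f n i) \<longlonglongrightarrow> (\<Sum>j\<in>A. 0)" unfolding f_def
    using tr i A unfolding transient_on_def by (intro tendsto_sum) blast
  then have "(\<lambda>n. f n i) \<longlonglongrightarrow> 0" by simp
  moreover have "(\<lambda>n. f n i) \<longlonglongrightarrow> 1" using fA i by simp
  ultimately show False using LIMSEQ_unique by fastforce
qed

lemma ms_upd: "s \<in> multistates K N \<Longrightarrow> k \<in> {1..K} \<Longrightarrow> j \<in> N k \<Longrightarrow> s(k := j) \<in> multistates K N"
  unfolding multistates_def by (auto simp: PiE_iff extensional_def)

lemma ms_comp: "s \<in> multistates K N \<Longrightarrow> k \<in> {1..K} \<Longrightarrow> s k \<in> N k"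
  unfolding multistates_def by auto

lemma ms_finite: "\<forall>k\<in>{1..K}. finite (N k) \<Longrightarrow> finite (multistates K N)"
  unfolding multistates_def by (intro finite_PiE) auto

lemma Qsum:
  fixes f :: "(nat \<Rightarrow> 'a) \<Rightarrow> real"
  assumes s: "s \<in> multistates K N" and k: "\<delta> s \<in> {1..K}"
    and fin: "\<forall>k\<in>{1..K}. finite (N k)"
  shows "(\<Sum>t\<in>multistates K N. Qmat N q \<delta> s t * f t)
       = (\<Sum>j\<in>N (\<delta> s). q (s (\<delta> s)) j * f (s(\<delta> s := j)))"
proof -
  let ?k = "\<delta> s"
  let ?g = "\<lambda>j. s(?k := j)"
  have inj: "inj_on ?g (N ?k)" by (rule inj_onI) (metis fun_upd_same)
  have sub: "?g ` N ?k \<subseteq> multistates K N" using ms_upd[OF s k] by auto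
  have Q: "Qmat N q \<delta> s t = (if t \<in> ?g ` N ?k then q (s ?k) (t ?k) else 0)" for t
    unfolding Qmat_def by auto
  have "(\<Sum>t\<in>multistates K N. Qmat N q \<delta> s t * f t) = (\<Sum>t\<in>?g ` N ?k. Qmat N q \<delta> s t * f t)"
    using sub ms_finite[OF fin] by (intro sum.mono_neutral_right) (auto simp: Q)
  also have "\<dots> = (\<Sum>j\<in>N ?k. Qmat N q \<delta> s (?g j) * f (?g j))"
    by (rule sum.reindex[OF inj, unfolded comp_def])
  also have "\<dots> = (\<Sum>j\<in>N ?k. q (s ?k) j * f (s(?k := j)))"
    by (intro sum.cong refl) (auto simp: Q)
  finally show ?thesis .
qed

lemma hypD:
  assumes "hyp K N q"
  shows "\<forall>k\<in>{1..K}. finite (N k)" "\<forall>k\<in>{1..K}. N k \<noteq> {}"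
    "\<forall>k\<in>{1..K}. \<forall>k'\<in>{1..K}. k \<noteq> k' \<longrightarrow> N k \<inter> N k' = {}"
    "\<forall>k\<in>{1..K}. \<forall>i\<in>N k. \<forall>j\<in>N k. 0 \<le> q i j"
    "\<forall>k\<in>{1..K}. \<forall>i\<in>N k. (\<Sum>j\<in>N k. q i j) \<le> 1"
    "noclosed K N q"
  using assms unfolding hyp_def substochastic_on_def by auto

lemma noclosedD:
  assumes "noclosed K N q" "k \<in> {1..K}" "A \<subseteq> N k" "A \<noteq> {}"
    "\<forall>x\<in>A. (\<Sum>j\<in>N k. q x j) = 1 \<and> (\<forall>j\<in>N k. 0 < q x j \<longrightarrow> j \<in> A)"
  shows False
  using assms unfolding noclosed_def by blast

lemma noZ:
  assumes h: "hyp K N q"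
    and pol: "\<forall>s\<in>multistates K N. \<delta> s \<in> {1..K}"
    and Z: "Z \<subseteq> multistates K N" "Z \<noteq> {}"
    and Zp: "\<forall>s\<in>Z. (\<Sum>j\<in>N (\<delta> s). q (s (\<delta> s)) j) = 1 \<and>
               (\<forall>j\<in>N (\<delta> s). 0 < q (s (\<delta> s)) j \<longrightarrow> s(\<delta> s := j) \<in> Z)"
  shows False
proof -
  note hd = hypD[OF h]
  have finZ: "finite Z" using Z(1) ms_finite[OF hd(1)] finite_subset by blast
  define cl where "cl C \<longleftrightarrow> C \<subseteq> Z \<and> C \<noteq> {} \<and>
     (\<forall>s\<in>C. \<forall>j\<in>N (\<delta> s). 0 < q (s (\<delta> s)) j \<longrightarrow> s(\<delta> s := j) \<in> C)" for C
  have "cl Z" unfolding cl_def using Z Zp by auto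
  then obtain C where C: "cl C" and Cmin: "\<And>C'. cl C' \<Longrightarrow> card C \<le> card C'"
    using ex_has_least_nat[of cl Z card] by blast
  have CZ: "C \<subseteq> Z" and Cne: "C \<noteq> {}" using C unfolding cl_def by auto
  have finC: "finite C" using CZ finZ finite_subset by blast
  define E where "E = {(a,b). a \<in> C \<and> (\<exists>j\<in>N (\<delta> a). 0 < q (a (\<delta> a)) j \<and> b = a(\<delta> a := j))}"
  have reach: "(t,u) \<in> E\<^sup>*" if t: "t \<in> C" and u: "u \<in> C" for t u
  proof -
    define R where "R = {u. (t,u) \<in> E\<^sup>*}"
    have RC: "R \<subseteq> C"
    proof
      fix x assume "x \<in> R"
      then have "(t,x) \<in> E\<^sup>*" unfolding R_def by simp
      then show "x \<in> C"
      proof (induction rule: rtrancl_induct)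
        case base then show ?case using t .
      next
        case (step y z)
        then show ?case using C unfolding E_def cl_def by auto
      qed
    qed
    have "cl R"
      unfolding cl_def
    proof (intro conjI ballI impI)
      show "R \<subseteq> Z" using RC CZ by blast
      show "R \<noteq> {}" unfolding R_def by blast
    next
      fix s j assume s: "s \<in> R" and j: "j \<in> N (\<delta> s)" and qp: "0 < q (s (\<delta> s)) j"
      have "(s, s(\<delta> s := j)) \<in> E" unfolding E_def using RC s j qp by blast
      then show "s(\<delta> s := j) \<in> R" using s unfolding R_def by simp
    qed
    then have "card C \<le> card R" by (rule Cmin)
    then have "R = C" using RC finC by (meson card_seteq)
    then show ?thesis using u unfolding R_def by blast
  qed
  obtain s0 where s0: "s0 \<in> C" using Cne by blast
  define k where "k = \<delta> s0"
  have k: "k \<in> {1..K}" unfolding k_def using pol s0 CZ Z(1) by blast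
  have path: "(b,u) \<in> E\<^sup>* \<Longrightarrow> b k \<noteq> u k \<Longrightarrow> (\<exists>t'\<in>C. \<delta> t' = k \<and> t' k = b k)" for b u
  proof (induction rule: converse_rtrancl_induct)
    case base then show ?case by simp
  next
    case (step a b')
    from step.hyps(1) obtain j where a: "a \<in> C" and j: "j \<in> N (\<delta> a)"
       and b': "b' = a(\<delta> a := j)" unfolding E_def by blast
    show ?case
    proof (cases "\<delta> a = k")
      case True then show ?thesis using a by blast
    next
      case False
      then have "b' k = a k" using b' by simp
      then show ?thesis using step.IH step.prems by metis
    qed
  qed
  define A where "A = (\<lambda>u. u k) ` {u\<in>C. \<delta> u = k}"
  have AN: "A \<subseteq> N k" unfolding A_def using CZ Z(1) ms_comp k by blast
  have Ane: "A \<noteq> {}" unfolding A_def using s0 k_def by blast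
  have "\<forall>x\<in>A. (\<Sum>j\<in>N k. q x j) = 1 \<and> (\<forall>j\<in>N k. 0 < q x j \<longrightarrow> j \<in> A)"
  proof
    fix x assume "x \<in> A"
    then obtain u where u: "u \<in> C" "\<delta> u = k" and x: "x = u k" unfolding A_def by blast
    have sum1: "(\<Sum>j\<in>N k. q x j) = 1" using Zp u CZ x by blast
    have "j \<in> A" if j: "j \<in> N k" and qp: "0 < q x j" for j
    proof -
      define b where "b = u(k := j)"
      have bC: "b \<in> C" using C u j qp x unfolding cl_def b_def by blast
      have "(b,u) \<in> E\<^sup>*" using reach bC u(1) by blast
      show "j \<in> A"
      proof (cases "j = x")
        case True then show ?thesis using u x unfolding A_def by blast
      next
        case False
        then have "b k \<noteq> u k" unfolding b_def using x by simp
        then obtain t' where "t' \<in> C" "\<delta> t' = k" "t' k = b k" using path \<open>(b,u) \<in> E\<^sup>*\<close> by blast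
        then show ?thesis unfolding A_def b_def by force
      qed
    qed
    then show "(\<Sum>j\<in>N k. q x j) = 1 \<and> (\<forall>j\<in>N k. 0 < q x j \<longrightarrow> j \<in> A)" using sum1 by blast
  qed
  then show False using noclosedD[OF hd(6) k AN Ane] by blast
qed

lemma minarg:
  assumes h: "hyp K N q"
    and pol: "\<forall>s\<in>multistates K N. \<delta> s \<in> {1..K}"
    and D: "\<forall>s\<in>multistates K N. (\<Sum>j\<in>N (\<delta> s). q (s (\<delta> s)) j * D (s(\<delta> s := j))) \<le> D s"
  shows "\<forall>s\<in>multistates K N. 0 \<le> D s"
proof (rule ccontr)
  note hd = hypD[OF h]
  let ?M = "multistates K N"
  assume "\<not> (\<forall>s\<in>?M. 0 \<le> D s)"
  then obtain s0 where s0: "s0 \<in> ?M" "D s0 < 0" by force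
  have finM: "finite ?M" using ms_finite[OF hd(1)] .
  define m where "m = Min (D ` ?M)"
  have mle: "\<And>s. s \<in> ?M \<Longrightarrow> m \<le> D s" unfolding m_def using finM by simp
  have mneg: "m < 0" using mle[OF s0(1)] s0(2) by simp
  have min: "m \<in> D ` ?M" unfolding m_def using finM s0(1) by (intro Min_in) auto
  define Z where "Z = {s\<in>?M. D s = m}"
  have Zne: "Z \<noteq> {}" using min unfolding Z_def by auto
  have "\<forall>s\<in>Z. (\<Sum>j\<in>N (\<delta> s). q (s (\<delta> s)) j) = 1 \<and>
               (\<forall>j\<in>N (\<delta> s). 0 < q (s (\<delta> s)) j \<longrightarrow> s(\<delta> s := j) \<in> Z)"
  proof
    fix s assume sZ: "s \<in> Z"
    then have s: "s \<in> ?M" and Ds: "D s = m" unfolding Z_def by auto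
    define k where "k = \<delta> s"
    have k: "k \<in> {1..K}" using pol s k_def by blast
    have xk: "s k \<in> N k" using ms_comp s k by blast
    have finN: "finite (N k)" using hd(1) k by blast
    have qnn: "\<forall>j\<in>N k. 0 \<le> q (s k) j" using hd(4) k xk by blast
    define \<beta> where "\<beta> = (\<Sum>j\<in>N k. q (s k) j)"
    have \<beta>1: "\<beta> \<le> 1" unfolding \<beta>_def using hd(5) k xk by blast
    have up: "\<forall>j\<in>N k. s(k := j) \<in> ?M" using ms_upd[OF s k] by blast
    have termnn: "\<forall>j\<in>N k. 0 \<le> q (s k) j * (D (s(k:=j)) - m)"
      using qnn up mle by (auto intro!: mult_nonneg_nonneg)
    have split: "(\<Sum>j\<in>N k. q (s k) j * D (s(k := j)))
          = \<beta> * m + (\<Sum>j\<in>N k. q (s k) j * (D (s(k:=j)) - m))"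
      unfolding \<beta>_def by (simp add: algebra_simps sum.distrib sum_distrib_right sum_distrib_left sum_subtractf)
    have "\<beta> * m + (\<Sum>j\<in>N k. q (s k) j * (D (s(k:=j)) - m)) \<le> m"
      using D s Ds split unfolding k_def by metis
    moreover have "m \<le> \<beta> * m" using \<beta>1 mneg by (simp add: mult_le_cancel_right1)
    moreover have "0 \<le> (\<Sum>j\<in>N k. q (s k) j * (D (s(k:=j)) - m))" using termnn by (simp add: sum_nonneg)
    ultimately have z: "(\<Sum>j\<in>N k. q (s k) j * (D (s(k:=j)) - m)) = 0" and bm: "\<beta> * m = m" by linarith+
    have "\<beta> = 1" using bm mneg by (metis mult_cancel_right2 order_less_irrefl)
    moreover have "\<forall>j\<in>N k. 0 < q (s k) j \<longrightarrow> s(k := j) \<in> Z"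
    proof (intro ballI impI)
      fix j assume j: "j \<in> N k" and qp: "0 < q (s k) j"
      have "q (s k) j * (D (s(k:=j)) - m) = 0" using sum_nonneg_eq_0_iff[OF finN, of "\<lambda>j. q (s k) j * (D (s(k:=j)) - m)"] termnn z j by simp
      then have "D (s(k:=j)) = m" using qp by simp
      then show "s(k := j) \<in> Z" unfolding Z_def using up j by blast
    qed
    ultimately show "(\<Sum>j\<in>N (\<delta> s). q (s (\<delta> s)) j) = 1 \<and>
               (\<forall>j\<in>N (\<delta> s). 0 < q (s (\<delta> s)) j \<longrightarrow> s(\<delta> s := j) \<in> Z)"
      unfolding \<beta>_def k_def by simp
  qed
  then show False using noZ[OF h pol _ Zne] unfolding Z_def by blast
qed

lemma pol_in: "\<delta> \<in> policies K N \<Longrightarrow> s \<in> multistates K N \<Longrightarrow> \<delta> s \<in> {1..K}"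
  unfolding policies_def by auto

lemma eq_unique:
  assumes h: "hyp K N q"
    and pol: "\<forall>s\<in>multistates K N. \<delta> s \<in> {1..K}"
    and V1: "\<forall>s\<in>multistates K N. Va s = g (s (\<delta> s)) + (\<Sum>j\<in>N (\<delta> s). q (s (\<delta> s)) j * Va (s(\<delta> s := j)))"
    and V2: "\<forall>s\<in>multistates K N. Vb s = g (s (\<delta> s)) + (\<Sum>j\<in>N (\<delta> s). q (s (\<delta> s)) j * Vb (s(\<delta> s := j)))"
  shows "\<forall>s\<in>multistates K N. Va s = Vb s"
proof -
  let ?M = "multistates K N"
  define D where "D s = Va s - Vb s" for s
  have eq: "\<forall>s\<in>?M. (\<Sum>j\<in>N (\<delta> s). q (s (\<delta> s)) j * D (s(\<delta> s := j))) = D s"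
  proof
    fix s assume s: "s \<in> ?M"
    have "(\<Sum>j\<in>N (\<delta> s). q (s (\<delta> s)) j * D (s(\<delta> s := j)))
       = (\<Sum>j\<in>N (\<delta> s). q (s (\<delta> s)) j * Va (s(\<delta> s := j))) - (\<Sum>j\<in>N (\<delta> s). q (s (\<delta> s)) j * Vb (s(\<delta> s := j)))"
      unfolding D_def by (simp add: algebra_simps sum_subtractf)
    also have "\<dots> = D s" unfolding D_def using V1 V2 s by force
    finally show "(\<Sum>j\<in>N (\<delta> s). q (s (\<delta> s)) j * D (s(\<delta> s := j))) = D s" .
  qed
  have "\<forall>s\<in>?M. 0 \<le> D s" using minarg[OF h pol] eq by simp
  moreover have "\<forall>s\<in>?M. 0 \<le> - D s"
  proof (rule minarg[OF h pol], intro ballI)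
    fix s assume s: "s \<in> ?M"
    have "(\<Sum>j\<in>N (\<delta> s). q (s (\<delta> s)) j * - D (s(\<delta> s := j))) = - (\<Sum>j\<in>N (\<delta> s). q (s (\<delta> s)) j * D (s(\<delta> s := j)))"
      by (simp add: sum_negf)
    then show "(\<Sum>j\<in>N (\<delta> s). q (s (\<delta> s)) j * - D (s(\<delta> s := j))) \<le> - D s" using eq s by simp
  qed
  ultimately show ?thesis unfolding D_def by force
qed

lemma Vval_props:
  assumes h: "hyp K N q"
    and pol: "\<forall>s\<in>multistates K N. \<delta> s \<in> {1..K}"
  shows "\<forall>s\<in>multistates K N. Vval K N q r w \<delta> s = r w (s (\<delta> s)) +
           (\<Sum>j\<in>N (\<delta> s). q (s (\<delta> s)) j * Vval K N q r w \<delta> (s(\<delta> s := j)))"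
proof -
  let ?M = "multistates K N"
  note hd = hypD[OF h]
  have finM: "finite ?M" using ms_finite[OF hd(1)] .
  let ?P = "\<lambda>V. V \<in> extensional ?M \<and>
        (\<forall>s\<in>?M. V s - (\<Sum>t\<in>?M. Qmat N q \<delta> s t * V t) = Rvec r w \<delta> s)"
  have conv: "(V s - (\<Sum>t\<in>?M. Qmat N q \<delta> s t * V t) = Rvec r w \<delta> s) \<longleftrightarrow>
      V s = r w (s (\<delta> s)) + (\<Sum>j\<in>N (\<delta> s). q (s (\<delta> s)) j * V (s(\<delta> s := j)))"
    if s: "s \<in> ?M" for V s
    using Qsum[where s=s and K=K and N=N and \<delta>=\<delta> and q=q and f=V, OF s pol[rule_format, OF s] hd(1)] unfolding Rvec_def by auto
  define A where "A s t = (if s = t then 1 else 0) - Qmat N q \<delta> s t" for s t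
  have Asum: "(\<Sum>t\<in>?M. A s t * v t) = v s - (\<Sum>t\<in>?M. Qmat N q \<delta> s t * v t)" if s: "s \<in> ?M" for s v
  proof -
    have "(\<Sum>t\<in>?M. A s t * v t) = (\<Sum>t\<in>?M. (if s = t then v t else 0)) - (\<Sum>t\<in>?M. Qmat N q \<delta> s t * v t)"
      unfolding A_def by (simp add: left_diff_distrib sum_subtractf if_distrib[where f="\<lambda>x. x * _"] cong: if_cong)
    also have "(\<Sum>t\<in>?M. (if s = t then v t else 0)) = v s" using finM s by simp
    finally show ?thesis .
  qed
  have "\<exists>v. \<forall>s\<in>?M. (\<Sum>t\<in>?M. A s t * v t) = Rvec r w \<delta> s"
  proof (rule finite_linear_surj[OF finM])
    fix v assume v: "\<forall>s\<in>?M. (\<Sum>t\<in>?M. A s t * v t) = 0"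
    have "\<forall>s\<in>?M. v s = (\<lambda>_. 0) (s (\<delta> s)) + (\<Sum>j\<in>N (\<delta> s). q (s (\<delta> s)) j * v (s(\<delta> s := j)))"
    proof
      fix s assume s: "s \<in> ?M"
      have "v s - (\<Sum>t\<in>?M. Qmat N q \<delta> s t * v t) = 0" using v s Asum by simp
      then show "v s = (\<lambda>_. 0) (s (\<delta> s)) + (\<Sum>j\<in>N (\<delta> s). q (s (\<delta> s)) j * v (s(\<delta> s := j)))"
        using Qsum[where s=s and K=K and N=N and \<delta>=\<delta> and q=q and f=v, OF s pol[rule_format, OF s] hd(1)] by simp
    qed
    moreover have "\<forall>s\<in>?M. (\<lambda>_. 0::real) s = (\<lambda>_. 0) (s (\<delta> s)) + (\<Sum>j\<in>N (\<delta> s). q (s (\<delta> s)) j * (\<lambda>_. 0) (s(\<delta> s := j)))"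
      by simp
    ultimately have "\<forall>s\<in>?M. v s = (\<lambda>_. 0::real) s"
      by (rule eq_unique[where g="\<lambda>_. 0" and Va=v and Vb="\<lambda>_. 0", OF h pol])
    then show "\<forall>s\<in>?M. v s = 0" by simp
  qed
  then obtain v where v: "\<forall>s\<in>?M. (\<Sum>t\<in>?M. A s t * v t) = Rvec r w \<delta> s" by blast
  define V0 where "V0 = restrict v ?M"
  have V0eq: "\<forall>s\<in>?M. V0 s = r w (s (\<delta> s)) + (\<Sum>j\<in>N (\<delta> s). q (s (\<delta> s)) j * V0 (s(\<delta> s := j)))"
  proof
    fix s assume s: "s \<in> ?M"
    have "v s - (\<Sum>t\<in>?M. Qmat N q \<delta> s t * v t) = Rvec r w \<delta> s" using v s Asum by simp
    then have "v s = r w (s (\<delta> s)) + (\<Sum>j\<in>N (\<delta> s). q (s (\<delta> s)) j * v (s(\<delta> s := j)))"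
      using conv[OF s] by blast
    moreover have "(\<Sum>j\<in>N (\<delta> s). q (s (\<delta> s)) j * v (s(\<delta> s := j))) = (\<Sum>j\<in>N (\<delta> s). q (s (\<delta> s)) j * V0 (s(\<delta> s := j)))"
      unfolding V0_def using ms_upd[OF s pol[rule_format, OF s]] by (intro sum.cong) auto
    ultimately show "V0 s = r w (s (\<delta> s)) + (\<Sum>j\<in>N (\<delta> s). q (s (\<delta> s)) j * V0 (s(\<delta> s := j)))"
      unfolding V0_def using s by simp
  qed
  have PV0: "?P V0"
  proof (intro conjI ballI)
    show "V0 \<in> extensional ?M" unfolding V0_def by simp
    fix s assume s: "s \<in> ?M"
    show "V0 s - (\<Sum>t\<in>?M. Qmat N q \<delta> s t * V0 t) = Rvec r w \<delta> s"
      using conv[OF s, of V0] V0eq s by blast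
  qed
  have uniq: "V = V0" if "?P V" for V
  proof (rule extensionalityI)
    show "V \<in> extensional ?M" "V0 \<in> extensional ?M" using that PV0 by auto
    have "\<forall>s\<in>?M. V s = r w (s (\<delta> s)) + (\<Sum>j\<in>N (\<delta> s). q (s (\<delta> s)) j * V (s(\<delta> s := j)))"
    proof
      fix s assume s: "s \<in> ?M"
      show "V s = r w (s (\<delta> s)) + (\<Sum>j\<in>N (\<delta> s). q (s (\<delta> s)) j * V (s(\<delta> s := j)))"
        using conv[OF s, of V] that s by blast
    qed
    then show "\<And>s. s \<in> ?M \<Longrightarrow> V s = V0 s" using eq_unique[where Va=V and Vb=V0 and g="r w", OF h pol _ V0eq] by blast
  qed
  have "Vval K N q r w \<delta> = V0" unfolding Vval_def
    by (rule the_equality[where P="?P", OF PV0 uniq])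
  then show ?thesis using V0eq by simp
qed

lemma Vval_unique:
  assumes h: "hyp K N q"
    and pol: "\<forall>s\<in>multistates K N. \<delta> s \<in> {1..K}"
    and V: "\<forall>s\<in>multistates K N. V s = g (s (\<delta> s)) + (\<Sum>j\<in>N (\<delta> s). q (s (\<delta> s)) j * V (s(\<delta> s := j)))"
    and g: "r w = g"
  shows "\<forall>s\<in>multistates K N. Vval K N q r w \<delta> s = V s"
  using eq_unique[where Va="Vval K N q r w \<delta>" and Vb=V and g=g, OF h pol _ V] Vval_props[OF h pol, of r w] g by simp

lemma bellman_opt:
  assumes h: "hyp K N q"
    and pol: "\<forall>s\<in>multistates K N. \<delta> s \<in> {1..K}"
    and B: "\<forall>s\<in>multistates K N. \<forall>k\<in>{1..K}. g (s k) + (\<Sum>j\<in>N k. q (s k) j * V (s(k := j))) \<le> V s"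
    and g: "r w = g"
  shows "\<forall>s\<in>multistates K N. Vval K N q r w \<delta> s \<le> V s"
proof -
  let ?M = "multistates K N"
  let ?U = "Vval K N q r w \<delta>"
  have U: "\<forall>s\<in>?M. ?U s = g (s (\<delta> s)) + (\<Sum>j\<in>N (\<delta> s). q (s (\<delta> s)) j * ?U (s(\<delta> s := j)))"
    using Vval_props[OF h pol, of r w] g by simp
  define D where "D s = V s - ?U s" for s
  have "\<forall>s\<in>?M. 0 \<le> D s"
  proof (rule minarg[OF h pol], intro ballI)
    fix s assume s: "s \<in> ?M"
    have "(\<Sum>j\<in>N (\<delta> s). q (s (\<delta> s)) j * D (s(\<delta> s := j)))
       = (\<Sum>j\<in>N (\<delta> s). q (s (\<delta> s)) j * V (s(\<delta> s := j))) - (\<Sum>j\<in>N (\<delta> s). q (s (\<delta> s)) j * ?U (s(\<delta> s := j)))"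
      unfolding D_def by (simp add: algebra_simps sum_subtractf)
    also have "\<dots> \<le> D s" unfolding D_def using B[rule_format, OF s pol[rule_format, OF s]] U s by force
    finally show "(\<Sum>j\<in>N (\<delta> s). q (s (\<delta> s)) j * D (s(\<delta> s := j))) \<le> D s" .
  qed
  then show ?thesis unfolding D_def by simp
qed

definition prio :: "nat \<Rightarrow> ('a \<Rightarrow> nat) \<Rightarrow> (nat \<Rightarrow> 'a) \<Rightarrow> nat" where
  "prio K \<rho> s = (THE k. k \<in> {1..K} \<and> (\<forall>k'\<in>{1..K}. k' \<noteq> k \<longrightarrow> \<rho> (s k) < \<rho> (s k')))"

lemma prio_eq:
  assumes "k \<in> {1..K}" "\<forall>k'\<in>{1..K}. k' \<noteq> k \<longrightarrow> \<rho> (s k) < \<rho> (s k')"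
  shows "prio K \<rho> s = k"
  unfolding prio_def
proof (rule the_equality)
  show "k \<in> {1..K} \<and> (\<forall>k'\<in>{1..K}. k' \<noteq> k \<longrightarrow> \<rho> (s k) < \<rho> (s k'))" using assms by blast
  fix k2 assume k2: "k2 \<in> {1..K} \<and> (\<forall>k'\<in>{1..K}. k' \<noteq> k2 \<longrightarrow> \<rho> (s k2) < \<rho> (s k'))"
  show "k2 = k"
  proof (rule ccontr)
    assume "k2 \<noteq> k"
    then have "\<rho> (s k2) < \<rho> (s k)" "\<rho> (s k) < \<rho> (s k2)" using k2 assms by auto
    then show False by simp
  qed
qed

lemma all_states_in: "k \<in> {1..K} \<Longrightarrow> i \<in> N k \<Longrightarrow> i \<in> all_states K N"
  unfolding all_states_def by blast

lemma prio_char: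
  assumes disj: "\<forall>k\<in>{1..K}. \<forall>k'\<in>{1..K}. k \<noteq> k' \<longrightarrow> N k \<inter> N k' = {}"
    and inj: "inj_on \<rho> (all_states K N)" and s: "s \<in> multistates K N" and K: "1 \<le> K"
  shows "prio K \<rho> s \<in> {1..K} \<and> (\<forall>k'\<in>{1..K}. k' \<noteq> prio K \<rho> s \<longrightarrow> \<rho> (s (prio K \<rho> s)) < \<rho> (s k'))"
proof -
  have fin: "finite ((\<lambda>k. \<rho> (s k)) ` {1..K})" "(\<lambda>k. \<rho> (s k)) ` {1..K} \<noteq> {}" using K by auto
  obtain k where k: "k \<in> {1..K}" "\<rho> (s k) = Min ((\<lambda>k. \<rho> (s k)) ` {1..K})"
    using Min_in[OF fin] by auto
  have "\<forall>k'\<in>{1..K}. k' \<noteq> k \<longrightarrow> \<rho> (s k) < \<rho> (s k')"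
  proof (intro ballI impI)
    fix k' assume k': "k' \<in> {1..K}" "k' \<noteq> k"
    have le: "\<rho> (s k) \<le> \<rho> (s k')" using k k' fin by simp
    have "s k \<in> N k" "s k' \<in> N k'" using ms_comp[OF s] k k' by auto
    moreover have "N k \<inter> N k' = {}" using disj k k' by metis
    ultimately have "s k \<noteq> s k'" by auto
    moreover have "s k \<in> all_states K N" "s k' \<in> all_states K N"
      using ms_comp[OF s] k k' all_states_in by metis+
    ultimately have "\<rho> (s k) \<noteq> \<rho> (s k')" using inj by (meson inj_onD)
    then show "\<rho> (s k) < \<rho> (s k')" using le by simp
  qed
  moreover from this have "prio K \<rho> s = k" by (rule prio_eq[OF k(1)])
  ultimately show ?thesis using k(1) by simp
qed

lemma index_max:
  fixes f d :: "'b \<Rightarrow> real"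
  assumes fin: "finite X" and ne: "X \<noteq> {}" and dnn: "\<forall>x\<in>X. 0 \<le> d x"
  shows "\<exists>x\<in>X. \<forall>y\<in>X. f y * d x \<le> f x * d y"
proof (cases "\<exists>x\<in>X. d x = 0 \<and> 0 < f x")
  case True
  then obtain x where x: "x \<in> X" "d x = 0" "0 < f x" by blast
  show ?thesis using x dnn by (intro bexI[OF _ x(1)]) auto
next
  case c1: False
  show ?thesis
  proof (cases "\<exists>x\<in>X. 0 < d x")
    case True
    define Y where "Y = {x\<in>X. 0 < d x}"
    have finY: "finite Y" "Y \<noteq> {}" using fin True unfolding Y_def by auto
    then have fin2: "finite ((\<lambda>x. f x / d x) ` Y)" "(\<lambda>x. f x / d x) ` Y \<noteq> {}" by auto
    obtain x where x: "x \<in> Y" "f x / d x = Max ((\<lambda>x. f x / d x) ` Y)"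
      using Max_in[OF fin2] by auto
    have xX: "x \<in> X" "0 < d x" using x(1) unfolding Y_def by auto
    show ?thesis
    proof (intro bexI[OF _ xX(1)] ballI)
      fix y assume y: "y \<in> X"
      show "f y * d x \<le> f x * d y"
      proof (cases "0 < d y")
        case True
        then have "y \<in> Y" unfolding Y_def using y by simp
        then have "f y / d y \<le> f x / d x" using x(2) fin2 by simp
        then show ?thesis using True xX(2) by (simp add: divide_simps mult.commute)
      next
        case False
        then have "d y = 0" using dnn y by force
        then have "f y \<le> 0" using c1 y by force
        then show ?thesis using \<open>d y = 0\<close> xX(2) by (simp add: mult_nonpos_nonneg)
      qed
    qed
  next
    case False
    then have "\<forall>x\<in>X. d x = 0" using dnn by force
    then show ?thesis using ne by auto
  qed
qed

lemma self_lt1: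
  assumes h: "hyp K N q" and k: "k \<in> {1..K}" and i: "i \<in> N k"
  shows "q i i < 1"
proof (rule ccontr)
  note hd = hypD[OF h]
  assume "\<not> q i i < 1"
  then have ge: "1 \<le> q i i" by simp
  have fin: "finite (N k)" using hd(1) k by blast
  have nn: "\<forall>j\<in>N k. 0 \<le> q i j" using hd(4) k i by blast
  have le1: "(\<Sum>j\<in>N k. q i j) \<le> 1" using hd(5) k i by blast
  have "q i i \<le> (\<Sum>j\<in>N k. q i j)" using member_le_sum[OF i] nn fin by blast
  then have s1: "(\<Sum>j\<in>N k. q i j) = 1" and qi: "q i i = 1" using ge le1 by linarith+
  have "\<forall>x\<in>{i}. (\<Sum>j\<in>N k. q x j) = 1 \<and> (\<forall>j\<in>N k. 0 < q x j \<longrightarrow> j \<in> {i})"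
  proof (intro ballI conjI impI)
    fix x j assume x: "x \<in> {i}" and j: "j \<in> N k" and qp: "0 < q x j"
    show "j \<in> {i}"
    proof (rule ccontr)
      assume "j \<notin> {i}"
      then have ji: "j \<noteq> i" by simp
      have "(\<Sum>j'\<in>{i,j}. q i j') \<le> (\<Sum>j'\<in>N k. q i j')"
        using i j fin nn by (intro sum_mono2) auto
      then have "q i i + q i j \<le> 1" using ji s1 by simp
      then show False using qi qp x by simp
    qed
  qed (use s1 in simp)
  then show False using noclosedD[OF hd(6) k _ _] i by blast
qed

definition redN :: "(nat \<Rightarrow> 'a set) \<Rightarrow> nat \<Rightarrow> 'a \<Rightarrow> nat \<Rightarrow> 'a set" where
  "redN N ks i0 = N(ks := N ks - {i0})"

definition redq :: "(nat \<Rightarrow> 'a set) \<Rightarrow> ('a \<Rightarrow> 'a \<Rightarrow> real) \<Rightarrow> nat \<Rightarrow> 'a \<Rightarrow> 'a \<Rightarrow> 'a \<Rightarrow> real" where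
  "redq N q ks i0 = (\<lambda>i j. if i \<in> N ks \<and> j \<in> N ks then q i j + q i i0 * q i0 j / (1 - q i0 i0) else q i j)"

definition redg :: "(nat \<Rightarrow> 'a set) \<Rightarrow> ('a \<Rightarrow> 'a \<Rightarrow> real) \<Rightarrow> ('a \<Rightarrow> real) \<Rightarrow> nat \<Rightarrow> 'a \<Rightarrow> 'a \<Rightarrow> real" where
  "redg N q g ks i0 = (\<lambda>i. if i \<in> N ks then g i + q i i0 * (g i0 / (1 - q i0 i0)) else g i)"

lemma disjD: "hyp K N q \<Longrightarrow> k \<in> {1..K} \<Longrightarrow> k' \<in> {1..K} \<Longrightarrow> k \<noteq> k' \<Longrightarrow> i \<in> N k \<Longrightarrow> i \<notin> N k'"
  using hypD(3) by blast

lemma reduced_hyp: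
  assumes h: "hyp K N q" and ks: "ks \<in> {1..K}" and i0: "i0 \<in> N ks" and ns: "N ks \<noteq> {i0}"
  shows "hyp K (redN N ks i0) (redq N q ks i0)"
proof -
  note hd = hypD[OF h]
  let ?N' = "redN N ks i0" and ?q' = "redq N q ks i0"
  define c where "c = 1 - q i0 i0"
  have c: "0 < c" unfolding c_def using self_lt1[OF h ks i0] by simp
  have N'k: "?N' k = (if k = ks then N ks - {i0} else N k)" for k unfolding redN_def by simp
  have finks: "finite (N ks)" using hd(1) ks by blast
  have nnks: "\<forall>i\<in>N ks. \<forall>j\<in>N ks. 0 \<le> q i j" using hd(4) ks by blast
  have q'o: "?q' i j = q i j" if "k \<in> {1..K}" "k \<noteq> ks" "i \<in> N k" for k i j
    using disjD[OF h that(1) ks that(2) that(3)] unfolding redq_def by simp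
  have q'ks: "?q' i j = q i j + q i i0 / c * q i0 j" if "i \<in> N ks" "j \<in> N ks" for i j
    using that unfolding redq_def c_def by simp
  have q'ge: "q i j \<le> ?q' i j" if "i \<in> N ks" "j \<in> N ks" for i j
    using q'ks[OF that] nnks that i0 c by (simp add: mult_nonneg_nonneg)
  have sumis: "(\<Sum>j\<in>N ks - {i0}. q i0 j) \<le> c"
  proof -
    have "(\<Sum>j\<in>N ks - {i0}. q i0 j) = (\<Sum>j\<in>N ks. q i0 j) - q i0 i0"
      using sum.remove[OF finks i0, of "q i0"] by simp
    then show ?thesis unfolding c_def using hd(5) ks i0 by force
  qed
  have sumred: "(\<Sum>j\<in>N ks - {i0}. ?q' i j) = (\<Sum>j\<in>N ks - {i0}. q i j) + q i i0 / c * (\<Sum>j\<in>N ks - {i0}. q i0 j)"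
    if i: "i \<in> N ks" for i
    using q'ks[OF i] by (simp add: sum.distrib sum_distrib_left)
  have sumsplit: "(\<Sum>j\<in>N ks. q i j) = (\<Sum>j\<in>N ks - {i0}. q i j) + q i i0" for i
    using sum.remove[OF finks i0, of "q i"] by simp
  show ?thesis
    unfolding hyp_def
  proof (intro conjI)
    show "\<forall>k\<in>{1..K}. finite (?N' k) \<and> ?N' k \<noteq> {}"
      using hd(1,2) ns i0 unfolding redN_def by auto
    show "\<forall>k\<in>{1..K}. \<forall>k'\<in>{1..K}. k \<noteq> k' \<longrightarrow> ?N' k \<inter> ?N' k' = {}"
    proof (intro ballI impI)
      fix k k' assume kk: "k \<in> {1..K}" "k' \<in> {1..K}" "k \<noteq> k'"
      have "?N' k \<subseteq> N k" "?N' k' \<subseteq> N k'" unfolding redN_def by auto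
      moreover have "N k \<inter> N k' = {}" using hd(3) kk by blast
      ultimately show "?N' k \<inter> ?N' k' = {}" by blast
    qed
    show "\<forall>k\<in>{1..K}. \<forall>i\<in>?N' k. \<forall>j\<in>?N' k. 0 \<le> ?q' i j"
    proof (intro ballI)
      fix k i j assume k: "k \<in> {1..K}" and i: "i \<in> ?N' k" and j: "j \<in> ?N' k"
      show "0 \<le> ?q' i j"
      proof (cases "k = ks")
        case True
        then have "i \<in> N ks" "j \<in> N ks" using i j N'k by auto
        then show ?thesis using q'ge nnks by (meson order_trans)
      next
        case False
        then show ?thesis using q'o[OF k False] i j N'k hd(4) k by simp
      qed
    qed
    show "\<forall>k\<in>{1..K}. substochastic_on (?N' k) ?q'"
      unfolding substochastic_on_def
    proof (intro ballI)
      fix k i assume k: "k \<in> {1..K}" and i: "i \<in> ?N' k"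
      show "(\<Sum>j\<in>?N' k. ?q' i j) \<le> 1"
      proof (cases "k = ks")
        case True
        then have iN: "i \<in> N ks" using i N'k by auto
        have "q i i0 / c * (\<Sum>j\<in>N ks - {i0}. q i0 j) \<le> q i i0 / c * c"
          using sumis nnks iN i0 c by (intro mult_left_mono) auto
        also have "\<dots> = q i i0" using c by simp
        finally have "(\<Sum>j\<in>?N' k. ?q' i j) \<le> (\<Sum>j\<in>N ks. q i j)"
          using sumred[OF iN] sumsplit[of i] True N'k by simp
        also have "\<dots> \<le> 1" using hd(5) ks iN by blast
        finally show ?thesis .
      next
        case False
        then show ?thesis using q'o[OF k False] i N'k hd(5) k by simp
      qed
    qed
    show "noclosed K ?N' ?q'"
      unfolding noclosed_def
    proof (intro ballI allI impI notI)
      fix k A assume k: "k \<in> {1..K}" and AN: "A \<subseteq> ?N' k" and Ane: "A \<noteq> {}"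
        and cl: "\<forall>x\<in>A. (\<Sum>j\<in>?N' k. ?q' x j) = 1 \<and> (\<forall>j\<in>?N' k. 0 < ?q' x j \<longrightarrow> j \<in> A)"
      show False
      proof (cases "k = ks")
        case False
        have AN2: "A \<subseteq> N k" using AN N'k False by simp
        have "\<forall>x\<in>A. (\<Sum>j\<in>N k. q x j) = 1 \<and> (\<forall>j\<in>N k. 0 < q x j \<longrightarrow> j \<in> A)"
        proof
          fix x assume x: "x \<in> A"
          then have xN: "x \<in> N k" using AN2 by blast
          show "(\<Sum>j\<in>N k. q x j) = 1 \<and> (\<forall>j\<in>N k. 0 < q x j \<longrightarrow> j \<in> A)"
          proof -
            have "?q' x = q x" using q'o[OF k False xN] by (rule ext)
            moreover have "(\<Sum>j\<in>?N' k. ?q' x j) = 1 \<and> (\<forall>j\<in>?N' k. 0 < ?q' x j \<longrightarrow> j \<in> A)"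
              using cl x by blast
            ultimately show ?thesis using N'k False by simp
          qed
        qed
        then show False using noclosedD[OF hd(6) k AN2 Ane] by blast
      next
        case True
        have AN2: "A \<subseteq> N ks - {i0}" using AN N'k True by simp
        have facts: "(\<Sum>j\<in>N ks. q x j) = 1 \<and> q x i0 / c * (\<Sum>j\<in>N ks - {i0}. q i0 j) = q x i0"
          if x: "x \<in> A" for x
        proof -
          have xN: "x \<in> N ks" using x AN2 by blast
          have e1: "(\<Sum>j\<in>N ks - {i0}. q x j) + q x i0 / c * (\<Sum>j\<in>N ks - {i0}. q i0 j) = 1"
            using cl x sumred[OF xN] True N'k by simp
          have "q x i0 / c * (\<Sum>j\<in>N ks - {i0}. q i0 j) \<le> q x i0 / c * c"
            using sumis nnks xN i0 c by (intro mult_left_mono) auto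
          then have e2: "q x i0 / c * (\<Sum>j\<in>N ks - {i0}. q i0 j) \<le> q x i0" using c by simp
          have "(\<Sum>j\<in>N ks. q x j) \<le> 1" using hd(5) ks xN by blast
          then show ?thesis using e1 e2 sumsplit[of x] by linarith
        qed
        have clq: "0 < q x j \<Longrightarrow> j \<in> N ks - {i0} \<Longrightarrow> x \<in> A \<Longrightarrow> j \<in> A" for x j
          using cl q'ge[of x j] AN2 True N'k by force
        show False
        proof (cases "\<exists>x0\<in>A. 0 < q x0 i0")
          case True
          then obtain x0 where x0: "x0 \<in> A" "0 < q x0 i0" by blast
          have "q x0 i0 / c * (\<Sum>j\<in>N ks - {i0}. q i0 j) = q x0 i0 / c * c"
            using facts[OF x0(1)] c by simp
          then have sc: "(\<Sum>j\<in>N ks - {i0}. q i0 j) = c" using x0(2) c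
            by (metis divide_eq_0_iff mult_cancel_left nonzero_mult_div_cancel_left order_less_irrefl times_divide_eq_left)
          have "\<forall>x\<in>insert i0 A. (\<Sum>j\<in>N ks. q x j) = 1 \<and> (\<forall>j\<in>N ks. 0 < q x j \<longrightarrow> j \<in> insert i0 A)"
          proof
            fix x assume x: "x \<in> insert i0 A"
            show "(\<Sum>j\<in>N ks. q x j) = 1 \<and> (\<forall>j\<in>N ks. 0 < q x j \<longrightarrow> j \<in> insert i0 A)"
            proof (cases "x = i0")
              case True
              have s1: "(\<Sum>j\<in>N ks. q x j) = 1" using sumsplit[of i0] sc True unfolding c_def by simp
              have "j \<in> insert i0 A" if j: "j \<in> N ks" "0 < q x j" for j
              proof (cases "j = i0")
                case False
                have x0N: "x0 \<in> N ks" using x0 AN2 by blast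
                have "0 < q x0 i0 / c * q i0 j" using x0(2) c j True by simp
                moreover have "0 \<le> q x0 j" using nnks x0N j by blast
                ultimately have "0 < ?q' x0 j" using q'ks[OF x0N j(1)] by linarith
                then show ?thesis using cl x0(1) j False N'k \<open>k = ks\<close> by auto
              qed simp
              then show ?thesis using s1 by blast
            next
              case False
              then have xA: "x \<in> A" using x by simp
              show ?thesis using facts[OF xA] clq xA by blast
            qed
          qed
          moreover have "insert i0 A \<subseteq> N ks" using AN2 i0 by blast
          ultimately show False using noclosedD[OF hd(6) ks] by blast
        next
          case False
          have "\<forall>x\<in>A. (\<Sum>j\<in>N ks. q x j) = 1 \<and> (\<forall>j\<in>N ks. 0 < q x j \<longrightarrow> j \<in> A)"
          proof
            fix x assume xA: "x \<in> A"
            have "j \<in> A" if j: "j \<in> N ks" "0 < q x j" for j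
            proof -
              have "j \<noteq> i0" using False xA j by force
              then show ?thesis using clq[OF j(2) _ xA] j(1) by blast
            qed
            then show "(\<Sum>j\<in>N ks. q x j) = 1 \<and> (\<forall>j\<in>N ks. 0 < q x j \<longrightarrow> j \<in> A)"
              using facts[OF xA] by blast
          qed
          moreover have "A \<subseteq> N ks" using AN2 by blast
          ultimately show False using noclosedD[OF hd(6) ks _ Ane] by blast
        qed
      qed
    qed
  qed
qed

lemma reduced_states:
  assumes h: "hyp K N q" and ks: "ks \<in> {1..K}" and i0: "i0 \<in> N ks"
  shows "all_states K (redN N ks i0) = all_states K N - {i0}"
proof -
  have "\<forall>k\<in>{1..K}. k \<noteq> ks \<longrightarrow> i0 \<notin> N k"
  proof (intro ballI impI)
    fix k assume k: "k \<in> {1..K}" "k \<noteq> ks"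
    show "i0 \<notin> N k" using disjD[OF h ks k(1) _ i0] k(2) by metis
  qed
  then show ?thesis using ks i0 unfolding all_states_def redN_def by auto
qed

lemma finite_states: "hyp K N q \<Longrightarrow> finite (all_states K N)"
  unfolding all_states_def using hypD(1) by blast

lemma reduced_card:
  assumes h: "hyp K N q" and ks: "ks \<in> {1..K}" and i0: "i0 \<in> N ks"
  shows "card (all_states K (redN N ks i0)) < card (all_states K N)"
  using reduced_states[OF assms] finite_states[OF h] all_states_in[where k=ks and K=K and i=i0 and N=N, OF ks i0]
  by (metis card_Diff1_less)

definition TT :: "(nat \<Rightarrow> 'a set) \<Rightarrow> ('a \<Rightarrow> 'a \<Rightarrow> real) \<Rightarrow> ('a \<Rightarrow> real) \<Rightarrow> ((nat \<Rightarrow> 'a) \<Rightarrow> real)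
   \<Rightarrow> (nat \<Rightarrow> 'a) \<Rightarrow> nat \<Rightarrow> real" where
  "TT N q g V s k = g (s k) + (\<Sum>j\<in>N k. q (s k) j * V (s(k := j)))"

definition gitt :: "nat \<Rightarrow> (nat \<Rightarrow> 'a set) \<Rightarrow> ('a \<Rightarrow> 'a \<Rightarrow> real) \<Rightarrow> ('a \<Rightarrow> real) \<Rightarrow> bool" where
  "gitt K N q g \<longleftrightarrow> (\<exists>\<rho> V. inj_on \<rho> (all_states K N) \<and>
     (\<forall>s\<in>multistates K N. V s = TT N q g V s (prio K \<rho> s)) \<and>
     (\<forall>s\<in>multistates K N. \<forall>k\<in>{1..K}. TT N q g V s k \<le> V s))"

definition extV :: "(nat \<Rightarrow> 'a set) \<Rightarrow> ('a \<Rightarrow> 'a \<Rightarrow> real) \<Rightarrow> ('a \<Rightarrow> real) \<Rightarrow> nat \<Rightarrow> 'a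
    \<Rightarrow> ((nat \<Rightarrow> 'a) \<Rightarrow> real) \<Rightarrow> (nat \<Rightarrow> 'a) \<Rightarrow> real" where
  "extV N q g ks i0 V' = (\<lambda>s. if s ks = i0
     then g i0 / (1 - q i0 i0) + (\<Sum>y\<in>N ks - {i0}. q i0 y / (1 - q i0 i0) * V' (s(ks := y)))
     else V' s)"

lemma keyT:
  assumes h: "hyp K N q" and ks: "ks \<in> {1..K}" and i0: "i0 \<in> N ks"
    and s: "s \<in> multistates K N" and sne: "s ks \<noteq> i0" and k: "k \<in> {1..K}"
  shows "TT N q g (extV N q g ks i0 V') s k
       = TT (redN N ks i0) (redq N q ks i0) (redg N q g ks i0) V' s k"
proof -
  note hd = hypD[OF h]
  let ?V = "extV N q g ks i0 V'"
  define c where "c = 1 - q i0 i0"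
  have Voff: "?V t = V' t" if "t ks \<noteq> i0" for t using that unfolding extV_def by simp
  show ?thesis
  proof (cases "k = ks")
    case False
    have sk: "s k \<in> N k" using ms_comp[OF s k] .
    have nks: "s k \<notin> N ks" using disjD[OF h k ks False sk] .
    have "(\<Sum>j\<in>N k. q (s k) j * ?V (s(k := j))) = (\<Sum>j\<in>N k. q (s k) j * V' (s(k := j)))"
      using Voff False sne by (intro sum.cong) auto
    then show ?thesis unfolding TT_def redN_def redq_def redg_def using False nks by simp
  next
    case True
    have finks: "finite (N ks)" using hd(1) ks by blast
    define x where "x = s ks"
    have x: "x \<in> N ks" "x \<noteq> i0" using ms_comp[OF s ks] sne unfolding x_def by auto
    have Vi0: "?V (s(ks := i0)) = g i0 / c + (\<Sum>y\<in>N ks - {i0}. q i0 y / c * V' (s(ks := y)))"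
      unfolding extV_def c_def by simp
    have S1: "(\<Sum>j\<in>N ks. q x j * ?V (s(ks := j)))
        = q x i0 * ?V (s(ks := i0)) + (\<Sum>j\<in>N ks - {i0}. q x j * ?V (s(ks := j)))"
      using sum.remove[OF finks i0] by simp
    have S2: "(\<Sum>j\<in>N ks - {i0}. q x j * ?V (s(ks := j))) = (\<Sum>j\<in>N ks - {i0}. q x j * V' (s(ks := j)))"
      using Voff by (intro sum.cong) auto
    have S3: "q x i0 * ?V (s(ks := i0)) = q x i0 * (g i0 / c) + (\<Sum>y\<in>N ks - {i0}. q x i0 * (q i0 y / c) * V' (s(ks := y)))"
      unfolding Vi0 by (simp add: distrib_left sum_distrib_left mult.assoc)
    have L0: "TT N q g ?V s k = g x + (\<Sum>j\<in>N ks. q x j * ?V (s(ks := j)))"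
      unfolding TT_def True x_def by simp
    have L: "TT N q g ?V s k = g x + q x i0 * (g i0 / c) +
          ((\<Sum>j\<in>N ks - {i0}. q x j * V' (s(ks := j))) + (\<Sum>y\<in>N ks - {i0}. q x i0 * (q i0 y / c) * V' (s(ks := y))))"
      unfolding L0 S1 S2 S3 by simp
    have "TT (redN N ks i0) (redq N q ks i0) (redg N q g ks i0) V' s k
       = g x + q x i0 * (g i0 / c) + (\<Sum>j\<in>N ks - {i0}. (q x j + q x i0 * q i0 j / c) * V' (s(ks := j)))"
      unfolding TT_def True x_def[symmetric] redN_def redg_def c_def using x
      by (intro arg_cong2[where f="(+)"] refl sum.cong) (auto simp: redq_def)
    also have "\<dots> = g x + q x i0 * (g i0 / c) + ((\<Sum>j\<in>N ks - {i0}. q x j * V' (s(ks := j))) + (\<Sum>y\<in>N ks - {i0}. q x i0 * (q i0 y / c) * V' (s(ks := y))))"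
      by (simp add: algebra_simps sum.distrib)
    finally show ?thesis using L by simp
  qed
qed

lemma TT_const: "TT N q g (\<lambda>_. h) s k = g (s k) + (\<Sum>j\<in>N k. q (s k) j) * h"
  unfolding TT_def by (simp add: sum_distrib_right)

lemma gittins_aux:
  "card (all_states K N) = n \<Longrightarrow> hyp K N q \<Longrightarrow> 1 \<le> K \<Longrightarrow> gitt K N q g"
proof (induction n arbitrary: N q g rule: less_induct)
  case (less n N q g)
  note h = less.prems(2) and K1 = less.prems(3)
  note hd = hypD[OF h]
  let ?M = "multistates K N"
  let ?As = "all_states K N"
  define d where "d = (\<lambda>(k,i). 1 - (\<Sum>j\<in>N k. q i j))"
  define f where "f = (\<lambda>(k::nat,i). g i)"
  define X where "X = Sigma {1..K} N"
  have finX: "finite X" unfolding X_def using hd(1) by (intro finite_SigmaI) auto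
  have neX: "X \<noteq> {}" unfolding X_def using hd(2) K1 by fastforce
  have dnn: "\<forall>p\<in>X. 0 \<le> d p" unfolding X_def d_def using hd(5) by auto
  obtain p where p: "p \<in> X" and pmax: "\<forall>y\<in>X. f y * d p \<le> f p * d y"
    using index_max[OF finX neX dnn] by blast
  obtain ks i0 where pks: "p = (ks, i0)" by (cases p)
  have ks: "ks \<in> {1..K}" and i0: "i0 \<in> N ks" using p pks unfolding X_def by auto
  define c where "c = 1 - q i0 i0"
  have c: "0 < c" unfolding c_def using self_lt1[OF h ks i0] by simp
  define ds where "ds = 1 - (\<Sum>j\<in>N ks. q i0 j)"
  have idx: "g a * ds \<le> g i0 * (1 - (\<Sum>j\<in>N k. q a j))" if "k \<in> {1..K}" "a \<in> N k" for k a
    using pmax that pks unfolding X_def f_def d_def ds_def by fastforce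
  define hh where "hh = g i0 / c"
  have finks: "finite (N ks)" using hd(1) ks by blast
  define P where "P = (\<Sum>y\<in>N ks - {i0}. q i0 y / c)"
  have P: "P = (c - ds) / c"
  proof -
    have "P = (\<Sum>y\<in>N ks - {i0}. q i0 y) / c" unfolding P_def by (simp add: sum_divide_distrib)
    also have "(\<Sum>y\<in>N ks - {i0}. q i0 y) = (\<Sum>y\<in>N ks. q i0 y) - q i0 i0"
      using sum.remove[OF finks i0, of "q i0"] by simp
    finally show ?thesis unfolding ds_def c_def by simp
  qed
  have arith: "g a + (\<Sum>x\<in>N k. q a x) * hh \<le> hh + P * g a" if "k \<in> {1..K}" "a \<in> N k" for k a
  proof -
    have e: "hh + P * g a - (g a + (\<Sum>x\<in>N k. q a x) * hh) = (g i0 * (1 - (\<Sum>x\<in>N k. q a x)) - g a * ds) / c"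
      unfolding hh_def P using c by (simp add: field_simps)
    have "0 \<le> (g i0 * (1 - (\<Sum>x\<in>N k. q a x)) - g a * ds) / c" using idx[OF that] c by simp
    then show ?thesis using e by linarith
  qed
  have noi0: "s k \<noteq> i0" if "s \<in> ?M" "k \<in> {1..K}" "k \<noteq> ks" for s k
  proof -
    have "s k \<in> N k" using ms_comp that by blast
    then show ?thesis using disjD[OF h ks that(2) _ i0] that(3) by metis
  qed
  show ?case
  proof (cases "N ks = {i0}")
    case True
    obtain \<rho>0 :: "'a \<Rightarrow> nat" where inj0: "inj_on \<rho>0 ?As"
      using finite_imp_inj_to_nat_seg[OF finite_states[OF h]] by blast
    define \<rho> where "\<rho> i = (if i = i0 then 0 else Suc (\<rho>0 i))" for i
    have inj: "inj_on \<rho> ?As" using inj0 unfolding \<rho>_def by (auto simp: inj_on_def)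
    have sks: "s ks = i0" if "s \<in> ?M" for s using ms_comp[OF that ks] True by simp
    have pr: "prio K \<rho> s = ks" if s: "s \<in> ?M" for s
      by (rule prio_eq[OF ks]) (use noi0[OF s] sks[OF s] in \<open>auto simp: \<rho>_def\<close>)
    have E1: "\<forall>s\<in>?M. (\<lambda>_. hh) s = TT N q g (\<lambda>_. hh) s (prio K \<rho> s)"
    proof
      fix s assume s: "s \<in> ?M"
      have "TT N q g (\<lambda>_. hh) s ks = g i0 + q i0 i0 * hh" unfolding TT_const sks[OF s] True by simp
      also have "\<dots> = hh" unfolding hh_def using c unfolding c_def by (simp add: field_simps)
      finally show "(\<lambda>_. hh) s = TT N q g (\<lambda>_. hh) s (prio K \<rho> s)" using pr[OF s] by simp
    qed
    have E2: "\<forall>s\<in>?M. \<forall>k\<in>{1..K}. TT N q g (\<lambda>_. hh) s k \<le> (\<lambda>_. hh) s"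
    proof (intro ballI)
      fix s k assume s: "s \<in> ?M" and k: "k \<in> {1..K}"
      show "TT N q g (\<lambda>_. hh) s k \<le> (\<lambda>_. hh) s"
      proof (cases "k = ks")
        case True
        have "hh = TT N q g (\<lambda>_. hh) s (prio K \<rho> s)" using E1 s by simp
        then show ?thesis using True pr[OF s] by simp
      next
        case False
        have "P = 0" unfolding P_def using True by simp
        then show ?thesis unfolding TT_const using arith[OF k ms_comp[OF s k]] by simp
      qed
    qed
    show ?thesis unfolding gitt_def
      by (rule exI[of _ \<rho>], rule exI[of _ "\<lambda>_. hh"]) (use inj E1 E2 in simp)
  next
    case False
    let ?N' = "redN N ks i0" and ?q' = "redq N q ks i0" and ?g' = "redg N q g ks i0"
    let ?M' = "multistates K ?N'"
    have h': "hyp K ?N' ?q'" by (rule reduced_hyp[OF h ks i0 False])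
    have "gitt K ?N' ?q' ?g'"
      using less.IH[OF _ refl h' K1] reduced_card[OF h ks i0] less.prems(1) by blast
    then obtain \<rho>' V' where inj': "inj_on \<rho>' (all_states K ?N')"
      and eq': "\<forall>s\<in>?M'. V' s = TT ?N' ?q' ?g' V' s (prio K \<rho>' s)"
      and bel': "\<forall>s\<in>?M'. \<forall>k\<in>{1..K}. TT ?N' ?q' ?g' V' s k \<le> V' s"
      unfolding gitt_def by blast
    have As': "all_states K ?N' = ?As - {i0}" by (rule reduced_states[OF h ks i0])
    define \<rho> where "\<rho> i = (if i = i0 then 0 else Suc (\<rho>' i))" for i
    have inj: "inj_on \<rho> ?As" using inj' unfolding As' \<rho>_def by (auto simp: inj_on_def)
    define V where "V = extV N q g ks i0 V'"
    have inM': "s \<in> ?M'" if "s \<in> ?M" "s ks \<noteq> i0" for s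
      using that unfolding multistates_def redN_def by (auto simp: PiE_iff)
    have updM': "s(ks := y) \<in> ?M'" if "s \<in> ?M" "y \<in> N ks - {i0}" for s y
      using inM'[OF ms_upd[OF that(1) ks]] that by auto
    have pr1: "prio K \<rho> s = ks" if s: "s \<in> ?M" "s ks = i0" for s
      by (rule prio_eq[OF ks]) (use noi0[OF s(1)] s(2) in \<open>auto simp: \<rho>_def\<close>)
    have pr2: "prio K \<rho> s = prio K \<rho>' s" if s: "s \<in> ?M" "s ks \<noteq> i0" for s
    proof -
      have disj': "\<forall>k\<in>{1..K}. \<forall>k'\<in>{1..K}. k \<noteq> k' \<longrightarrow> ?N' k \<inter> ?N' k' = {}"
        using hypD(3)[OF h'] .
      have pc: "prio K \<rho>' s \<in> {1..K} \<and> (\<forall>k'\<in>{1..K}. k' \<noteq> prio K \<rho>' s \<longrightarrow> \<rho>' (s (prio K \<rho>' s)) < \<rho>' (s k'))"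
        by (rule prio_char[OF disj' inj' inM'[OF s] K1])
      have ne: "s k \<noteq> i0" if "k \<in> {1..K}" for k
        using noi0[OF s(1) that] s(2) by (cases "k = ks") auto
      show ?thesis
        by (rule prio_eq) (use pc ne in \<open>auto simp: \<rho>_def\<close>)
    qed
    have Voff: "V t = V' t" if "t ks \<noteq> i0" for t using that unfolding V_def extV_def by simp
    have Von: "V t = g i0 / c + (\<Sum>y\<in>N ks - {i0}. q i0 y / c * V' (t(ks := y)))" if "t ks = i0" for t
      using that unfolding V_def extV_def c_def by simp
    have eqA: "V s = TT N q g V s (prio K \<rho> s)" if s: "s \<in> ?M" for s
    proof (cases "s ks = i0")
      case False
      have pk: "prio K \<rho>' s \<in> {1..K}"
        using prio_char[OF hypD(3)[OF h'] inj' inM'[OF s False] K1] by blast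
      have "V s = V' s" using Voff False by simp
      also have "\<dots> = TT ?N' ?q' ?g' V' s (prio K \<rho>' s)" using eq' inM'[OF s False] by blast
      also have "\<dots> = TT N q g V s (prio K \<rho>' s)"
        unfolding V_def using keyT[OF h ks i0 s False pk] by simp
      finally show ?thesis using pr2[OF s False] by simp
    next
      case True
      define S where "S = (\<Sum>y\<in>N ks - {i0}. q i0 y * V' (s(ks := y)))"
      have Vs: "V s = (g i0 + S) / c" unfolding Von[of s, OF True] S_def
        by (simp add: add_divide_distrib sum_divide_distrib)
      have "TT N q g V s ks = g i0 + (q i0 i0 * V (s(ks := i0)) + (\<Sum>j\<in>N ks - {i0}. q i0 j * V (s(ks := j))))"
        unfolding TT_def True using sum.remove[OF finks i0] by simp
      also have "(\<Sum>j\<in>N ks - {i0}. q i0 j * V (s(ks := j))) = S"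
        unfolding S_def using Voff by (intro sum.cong) auto
      also have "s(ks := i0) = s" using True by auto
      finally have "TT N q g V s ks = g i0 + (q i0 i0 * V s + S)" .
      also have "\<dots> = V s" unfolding Vs using c unfolding c_def by (simp add: field_simps)
      finally show ?thesis using pr1[OF s True] by simp
    qed
    have belA: "TT N q g V s k \<le> V s" if s: "s \<in> ?M" and k: "k \<in> {1..K}" for s k
    proof (cases "s ks = i0")
      case False
      have "TT N q g V s k = TT ?N' ?q' ?g' V' s k"
        unfolding V_def using keyT[OF h ks i0 s False k] by simp
      also have "\<dots> \<le> V' s" using bel' inM'[OF s False] k by blast
      finally show ?thesis using Voff False by simp
    next
      case True
      show ?thesis
      proof (cases "k = ks")
        case True
        then show ?thesis using eqA[OF s] pr1[OF s \<open>s ks = i0\<close>] by simp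
      next
        case kne: False
        define a where "a = s k"
        have a: "a \<in> N k" unfolding a_def using ms_comp[OF s k] .
        have ank: "a \<notin> N ks" using disjD[OF h k ks kne a] .
        define W where "W x y = V' (s(k := x, ks := y))" for x y
        define p where "p y = q i0 y / c" for y
        have pnn: "0 \<le> p y" if "y \<in> N ks" for y
          unfolding p_def using c hd(4) ks i0 that by simp
        have Vx: "V (s(k := x)) = hh + (\<Sum>y\<in>N ks - {i0}. p y * W x y)" for x
          using Von[of "s(k := x)"] True kne unfolding W_def p_def hh_def by simp
        have IHy: "g a + (\<Sum>x\<in>N k. q a x * W x y) \<le> V' (s(ks := y))" if y: "y \<in> N ks - {i0}" for y
        proof -
          have u: "s(ks := y) \<in> ?M'" by (rule updM'[OF s y])
          have "TT ?N' ?q' ?g' V' (s(ks := y)) k \<le> V' (s(ks := y))" using bel' u k by blast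
          moreover have "TT ?N' ?q' ?g' V' (s(ks := y)) k = g a + (\<Sum>x\<in>N k. q a x * W x y)"
            unfolding TT_def W_def using kne ank
            by (simp add: redN_def redq_def redg_def a_def fun_upd_twist)
          ultimately show ?thesis by simp
        qed
        have "TT N q g V s k = g a + (\<Sum>x\<in>N k. q a x * (hh + (\<Sum>y\<in>N ks - {i0}. p y * W x y)))"
          unfolding TT_def a_def[symmetric] Vx ..
        also have "\<dots> = g a + (\<Sum>x\<in>N k. q a x) * hh + (\<Sum>y\<in>N ks - {i0}. \<Sum>x\<in>N k. p y * (q a x * W x y))"
        proof -
          have sw: "(\<Sum>x\<in>N k. \<Sum>y\<in>N ks - {i0}. p y * (q a x * W x y)) = (\<Sum>y\<in>N ks - {i0}. \<Sum>x\<in>N k. p y * (q a x * W x y))"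
            by (rule sum.swap)
          have "(\<Sum>x\<in>N k. q a x * (hh + (\<Sum>y\<in>N ks - {i0}. p y * W x y)))
             = (\<Sum>x\<in>N k. q a x) * hh + (\<Sum>x\<in>N k. \<Sum>y\<in>N ks - {i0}. p y * (q a x * W x y))"
            by (simp add: distrib_left sum.distrib sum_distrib_left sum_distrib_right mult.left_commute)
          then show ?thesis using sw by simp
        qed
        also have "\<dots> \<le> hh + P * g a + (\<Sum>y\<in>N ks - {i0}. \<Sum>x\<in>N k. p y * (q a x * W x y))"
          using arith[OF k a] by simp
        also have "\<dots> = hh + (\<Sum>y\<in>N ks - {i0}. p y * (g a + (\<Sum>x\<in>N k. q a x * W x y)))"
          unfolding P_def p_def by (simp add: algebra_simps sum.distrib sum_distrib_left sum_distrib_right)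
        also have "\<dots> \<le> hh + (\<Sum>y\<in>N ks - {i0}. p y * V' (s(ks := y)))"
          using IHy pnn by (intro add_left_mono sum_mono mult_left_mono) auto
        also have "\<dots> = V s" using Von[of s, OF True] unfolding hh_def p_def by simp
        finally show ?thesis .
      qed
    qed
    show ?thesis unfolding gitt_def
      using inj eqA belA by blast
  qed
qed

lemma gittins: "hyp K N q \<Longrightarrow> 1 \<le> K \<Longrightarrow> gitt K N q g"
  using gittins_aux by blast

definition hullset :: "'p set \<Rightarrow> ('p \<Rightarrow> nat \<Rightarrow> real) \<Rightarrow> (nat \<Rightarrow> real) set" where
  "hullset P v = {y. \<exists>\<beta>. (\<forall>\<pi>\<in>P. 0 \<le> \<beta> \<pi>) \<and> sum \<beta> P = 1 \<and> y = (\<lambda>w. \<Sum>\<pi>\<in>P. \<beta> \<pi> * v \<pi> w)}"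

lemma hullsetI:
  assumes "\<forall>\<pi>\<in>P. 0 \<le> \<beta> \<pi>" "sum \<beta> P = 1"
  shows "(\<lambda>w. \<Sum>\<pi>\<in>P. \<beta> \<pi> * v \<pi> w) \<in> hullset P v"
  unfolding hullset_def mem_Collect_eq by (intro exI[of _ \<beta>]) (simp add: assms)

lemma coord_cont: "continuous_on S (\<lambda>y::nat \<Rightarrow> real. y w)"
  by (rule continuous_on_subset[OF continuous_on_product_coordinates]) simp

lemma hullset_ne: "finite P \<Longrightarrow> P \<noteq> {} \<Longrightarrow> hullset P v \<noteq> {}"
proof -
  assume "finite P" "P \<noteq> {}"
  then obtain x where x: "x \<in> P" by blast
  let ?\<beta> = "\<lambda>\<pi>. if \<pi> = x then 1 else (0::real)"
  have "(\<forall>\<pi>\<in>P. 0 \<le> ?\<beta> \<pi>) \<and> sum ?\<beta> P = 1" using x \<open>finite P\<close> by simp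
  then have "(\<lambda>w. \<Sum>\<pi>\<in>P. ?\<beta> \<pi> * v \<pi> w) \<in> hullset P v" by (intro hullsetI) auto
  then show ?thesis by blast
qed

lemma compact_hullset:
  assumes "finite P"
  shows "compact (hullset P v)"
  using assms
proof (induction rule: finite_induct)
  case empty
  then show ?case unfolding hullset_def by simp
next
  case (insert x F)
  show ?case
  proof (cases "F = {}")
    case True
    have "hullset (insert x F) v = {(\<lambda>w. v x w)}" unfolding hullset_def True
      by (auto intro!: exI[of _ "\<lambda>_. 1"])
    then show ?thesis by simp
  next
    case False
    define f where "f = (\<lambda>(u::real, y::nat \<Rightarrow> real). (\<lambda>w. u * v x w + (1 - u) * y w))"
    have cont: "continuous_on ({0..1} \<times> hullset F v) f"
      unfolding f_def split_def
    proof (intro continuous_on_coordinatewise_then_product)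
      fix w
      have c1: "continuous_on ({0..1} \<times> hullset F v) (\<lambda>p. (snd p) w)"
        by (rule continuous_on_compose2[OF coord_cont continuous_on_snd]) (auto intro: continuous_on_id)
      show "continuous_on ({0..1} \<times> hullset F v) (\<lambda>p. fst p * v x w + (1 - fst p) * snd p w)"
        by (intro continuous_intros c1)
    qed
    have comp: "compact ({0..1::real} \<times> hullset F v)"
      by (intro compact_Times compact_Icc insert.IH)
    have eq: "f ` ({0..1} \<times> hullset F v) = hullset (insert x F) v"
    proof
      show "f ` ({0..1} \<times> hullset F v) \<subseteq> hullset (insert x F) v"
      proof
        fix z assume "z \<in> f ` ({0..1} \<times> hullset F v)"
        then obtain u y where u: "u \<in> {0..1}" and y: "y \<in> hullset F v" and z: "z = f (u, y)" by auto
        obtain \<beta> where \<beta>: "\<forall>\<pi>\<in>F. 0 \<le> \<beta> \<pi>" "sum \<beta> F = 1" "y = (\<lambda>w. \<Sum>\<pi>\<in>F. \<beta> \<pi> * v \<pi> w)"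
          using y unfolding hullset_def by blast
        define \<beta>' where "\<beta>' \<pi> = (if \<pi> = x then u else (1 - u) * \<beta> \<pi>)" for \<pi>
        have s1: "sum \<beta>' (insert x F) = 1"
        proof -
          have "sum \<beta>' (insert x F) = u + sum \<beta>' F" using insert by (simp add: \<beta>'_def)
          also have "sum \<beta>' F = (1 - u) * sum \<beta> F"
          proof -
            have "sum \<beta>' F = (\<Sum>\<pi>\<in>F. (1 - u) * \<beta> \<pi>)" using insert by (intro sum.cong) (auto simp: \<beta>'_def)
            then show ?thesis by (simp add: sum_distrib_left)
          qed
          finally show ?thesis using \<beta>(2) by simp
        qed
        have nn: "\<forall>\<pi>\<in>insert x F. 0 \<le> \<beta>' \<pi>" using u \<beta>(1) unfolding \<beta>'_def by auto
        have "z = (\<lambda>w. \<Sum>\<pi>\<in>insert x F. \<beta>' \<pi> * v \<pi> w)"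
        proof
          fix w
          have "(\<Sum>\<pi>\<in>insert x F. \<beta>' \<pi> * v \<pi> w) = u * v x w + (\<Sum>\<pi>\<in>F. \<beta>' \<pi> * v \<pi> w)"
            using insert by (simp add: \<beta>'_def)
          also have "(\<Sum>\<pi>\<in>F. \<beta>' \<pi> * v \<pi> w) = (1 - u) * (\<Sum>\<pi>\<in>F. \<beta> \<pi> * v \<pi> w)"
          proof -
            have "(\<Sum>\<pi>\<in>F. \<beta>' \<pi> * v \<pi> w) = (\<Sum>\<pi>\<in>F. (1 - u) * (\<beta> \<pi> * v \<pi> w))"
              using insert by (intro sum.cong) (auto simp: \<beta>'_def)
            then show ?thesis by (simp add: sum_distrib_left)
          qed
          finally show "z w = (\<Sum>\<pi>\<in>insert x F. \<beta>' \<pi> * v \<pi> w)"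
            unfolding z f_def \<beta>(3) by simp
        qed
        then show "z \<in> hullset (insert x F) v" using hullsetI[OF nn s1] by simp
      qed
    next
      show "hullset (insert x F) v \<subseteq> f ` ({0..1} \<times> hullset F v)"
      proof
        fix z assume "z \<in> hullset (insert x F) v"
        then obtain \<beta> where \<beta>: "\<forall>\<pi>\<in>insert x F. 0 \<le> \<beta> \<pi>" "sum \<beta> (insert x F) = 1"
          "z = (\<lambda>w. \<Sum>\<pi>\<in>insert x F. \<beta> \<pi> * v \<pi> w)"
          unfolding hullset_def by blast
        define u where "u = \<beta> x"
        have sF: "sum \<beta> F = 1 - u" using \<beta>(2) insert unfolding u_def by simp
        have sFnn: "0 \<le> sum \<beta> F" using \<beta>(1) by (simp add: sum_nonneg)
        have u: "u \<in> {0..1}" using \<beta>(1) sF sFnn unfolding u_def by auto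
        have zw: "z w = u * v x w + (\<Sum>\<pi>\<in>F. \<beta> \<pi> * v \<pi> w)" for w
          using \<beta>(3) insert unfolding u_def by simp
        show "z \<in> f ` ({0..1} \<times> hullset F v)"
        proof (cases "u = 1")
          case True
          then have "sum \<beta> F = 0" using sF by simp
          then have b0: "\<forall>\<pi>\<in>F. \<beta> \<pi> = 0" using sum_nonneg_eq_0_iff[OF insert(1)] \<beta>(1) by auto
          obtain y where y: "y \<in> hullset F v" using hullset_ne[OF insert(1) False] by blast
          have "z = f (1, y)" unfolding f_def using zw True b0 by (auto intro!: ext)
          then show ?thesis by (rule image_eqI) (use y in auto)
        next
          case False
          then have u1: "0 < 1 - u" using u by simp
          define \<gamma> where "\<gamma> \<pi> = \<beta> \<pi> / (1 - u)" for \<pi>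
          define y where "y = (\<lambda>w. \<Sum>\<pi>\<in>F. \<gamma> \<pi> * v \<pi> w)"
          have "sum \<gamma> F = 1" unfolding \<gamma>_def using sF u1 by (simp add: sum_divide_distrib[symmetric])
          moreover have "\<forall>\<pi>\<in>F. 0 \<le> \<gamma> \<pi>" unfolding \<gamma>_def using \<beta>(1) u1 by simp
          ultimately have y: "y \<in> hullset F v" unfolding y_def by (intro hullsetI)
          have "z = f (u, y)"
          proof
            fix w
            have "(1 - u) * y w = (\<Sum>\<pi>\<in>F. \<beta> \<pi> * v \<pi> w)"
              unfolding y_def \<gamma>_def using u1 by (simp add: sum_distrib_left)
            then show "z w = f (u, y) w" unfolding f_def using zw by simp
          qed
          then show ?thesis by (rule image_eqI) (use u y in auto)
        qed
      qed
    qed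
    show ?thesis unfolding eq[symmetric] by (rule compact_continuous_image[OF cont comp])
  qed
qed

lemma separation:
  fixes P :: "'p set" and v :: "'p \<Rightarrow> nat \<Rightarrow> real" and z :: "nat \<Rightarrow> real" and Ws :: "nat set"
  assumes finP: "finite P" and neP: "P \<noteq> {}" and finW: "finite Ws"
    and H: "\<And>lam. \<exists>\<pi>\<in>P. (\<Sum>w\<in>Ws. lam w * z w) \<le> (\<Sum>w\<in>Ws. lam w * v \<pi> w)"
  shows "\<exists>\<beta>. (\<forall>\<pi>\<in>P. 0 \<le> \<beta> \<pi>) \<and> sum \<beta> P = 1 \<and> (\<forall>w\<in>Ws. (\<Sum>\<pi>\<in>P. \<beta> \<pi> * v \<pi> w) = z w)"
proof -
  let ?S = "hullset P v"
  define F where "F y = (\<Sum>w\<in>Ws. (y w - z w)^2)" for y :: "nat \<Rightarrow> real"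
  have contF: "continuous_on ?S F" unfolding F_def
    by (intro continuous_intros coord_cont)
  obtain ys where ys: "ys \<in> ?S" and ysmin: "\<forall>y\<in>?S. F ys \<le> F y"
    using continuous_attains_inf[OF compact_hullset[OF finP] hullset_ne[OF finP neP] contF] by blast
  obtain \<beta>s where \<beta>s: "\<forall>\<pi>\<in>P. 0 \<le> \<beta>s \<pi>" "sum \<beta>s P = 1" "ys = (\<lambda>w. \<Sum>\<pi>\<in>P. \<beta>s \<pi> * v \<pi> w)"
    using ys unfolding hullset_def by blast
  define l where "l w = z w - ys w" for w
  show ?thesis
  proof (cases "\<forall>w\<in>Ws. l w = 0")
    case True
    show ?thesis
    proof (intro exI[of _ \<beta>s] conjI ballI)
      show "\<And>\<pi>. \<pi> \<in> P \<Longrightarrow> 0 \<le> \<beta>s \<pi>" using \<beta>s(1) by blast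
      show "sum \<beta>s P = 1" by (rule \<beta>s(2))
      fix w assume "w \<in> Ws"
      then show "(\<Sum>\<pi>\<in>P. \<beta>s \<pi> * v \<pi> w) = z w" using True \<beta>s(3) unfolding l_def
        by (metis eq_iff_diff_eq_0)
    qed
  next
    case False
    then obtain w0 where w0: "w0 \<in> Ws" "l w0 \<noteq> 0" by blast
    have pos: "0 < (\<Sum>w\<in>Ws. l w ^ 2)"
      using w0 finW by (intro sum_pos2[of Ws w0]) auto
    have key: "(\<Sum>w\<in>Ws. l w * (v \<pi> w - ys w)) \<le> 0" if \<pi>: "\<pi> \<in> P" for \<pi>
    proof -
      define d where "d w = v \<pi> w - ys w" for w
      define A where "A = (\<Sum>w\<in>Ws. l w * d w)"
      define D where "D = (\<Sum>w\<in>Ws. d w ^ 2)"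
      have Dnn: "0 \<le> D" unfolding D_def by (simp add: sum_nonneg)
      have ineq: "2 * t * A \<le> t^2 * D" if t: "0 \<le> t" "t \<le> 1" for t
      proof -
        define \<gamma> where "\<gamma> \<pi>' = (1 - t) * \<beta>s \<pi>' + t * (if \<pi>' = \<pi> then 1 else 0)" for \<pi>'
        have gnn: "\<forall>\<pi>'\<in>P. 0 \<le> \<gamma> \<pi>'" unfolding \<gamma>_def using t \<beta>s(1) by auto
        have gs: "sum \<gamma> P = 1" unfolding \<gamma>_def using \<beta>s(2) finP \<pi>
          by (simp add: sum.distrib sum_distrib_left[symmetric])
        have yt: "(\<lambda>w. \<Sum>\<pi>'\<in>P. \<gamma> \<pi>' * v \<pi>' w) \<in> ?S" by (rule hullsetI[OF gnn gs])
        have ytw: "(\<Sum>\<pi>'\<in>P. \<gamma> \<pi>' * v \<pi>' w) = ys w + t * d w" for w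
        proof -
          have "(\<Sum>\<pi>'\<in>P. \<gamma> \<pi>' * v \<pi>' w) = (1 - t) * (\<Sum>\<pi>'\<in>P. \<beta>s \<pi>' * v \<pi>' w) + t * v \<pi> w"
          proof -
            have "(\<Sum>\<pi>'\<in>P. \<gamma> \<pi>' * v \<pi>' w) = (\<Sum>\<pi>'\<in>P. (1 - t) * (\<beta>s \<pi>' * v \<pi>' w) + (if \<pi>' = \<pi> then t * v \<pi> w else 0))"
              unfolding \<gamma>_def by (intro sum.cong) (auto simp: algebra_simps)
            also have "\<dots> = (1 - t) * (\<Sum>\<pi>'\<in>P. \<beta>s \<pi>' * v \<pi>' w) + t * v \<pi> w"
              using finP \<pi> by (simp add: sum.distrib sum_distrib_left)
            finally show ?thesis .
          qed
          then show ?thesis unfolding d_def \<beta>s(3) by (simp add: algebra_simps)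
        qed
        have "F ys \<le> F (\<lambda>w. \<Sum>\<pi>'\<in>P. \<gamma> \<pi>' * v \<pi>' w)" using ysmin yt by blast
        also have "F (\<lambda>w. \<Sum>\<pi>'\<in>P. \<gamma> \<pi>' * v \<pi>' w) = (\<Sum>w\<in>Ws. (t * d w - l w)^2)"
          unfolding F_def ytw l_def by (simp add: algebra_simps)
        also have "\<dots> = (\<Sum>w\<in>Ws. l w ^ 2) - 2 * t * A + t^2 * D"
          unfolding A_def D_def
          by (simp add: power2_eq_square algebra_simps sum.distrib sum_subtractf sum_distrib_left)
        finally have "F ys \<le> (\<Sum>w\<in>Ws. l w ^ 2) - 2 * t * A + t^2 * D" .
        moreover have "F ys = (\<Sum>w\<in>Ws. l w ^ 2)" unfolding F_def l_def
          by (simp add: power2_commute)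
        ultimately show ?thesis by simp
      qed
      show ?thesis
      proof (rule ccontr)
        assume "\<not> ?thesis"
        then have Apos: "0 < A" unfolding A_def d_def by simp
        define t where "t = min 1 (A / (D + 1))"
        have t0: "0 < t" unfolding t_def using Apos Dnn by simp
        have t1: "t \<le> 1" unfolding t_def by simp
        have "2 * t * A \<le> t^2 * D" using ineq t0 t1 by simp
        then have "2 * A \<le> t * D" using t0 by (simp add: power2_eq_square mult.assoc)
        also have "t * D \<le> A / (D + 1) * D" unfolding t_def using Dnn
          by (intro mult_right_mono) auto
        also have "A / (D + 1) * D < A" using Apos Dnn by (simp add: field_simps)
        finally show False using Apos by simp
      qed
    qed
    obtain \<pi> where \<pi>: "\<pi> \<in> P" and Hp: "(\<Sum>w\<in>Ws. l w * z w) \<le> (\<Sum>w\<in>Ws. l w * v \<pi> w)"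
      using H[of l] by blast
    have "(\<Sum>w\<in>Ws. l w * v \<pi> w) = (\<Sum>w\<in>Ws. l w * ys w) + (\<Sum>w\<in>Ws. l w * (v \<pi> w - ys w))"
      by (simp add: algebra_simps sum.distrib[symmetric])
    also have "\<dots> \<le> (\<Sum>w\<in>Ws. l w * ys w)" using key[OF \<pi>] by simp
    also have "\<dots> < (\<Sum>w\<in>Ws. l w * ys w) + (\<Sum>w\<in>Ws. l w ^ 2)" using pos by simp
    also have "\<dots> = (\<Sum>w\<in>Ws. l w * z w)" unfolding l_def
      by (simp add: power2_eq_square algebra_simps sum.distrib[symmetric])
    finally show ?thesis using Hp by simp
  qed
qed

lemma rank_props:
  fixes \<rho> :: "'a \<Rightarrow> nat"
  assumes fin: "finite A" and inj: "inj_on \<rho> A"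
  shows "\<And>x y. x \<in> A \<Longrightarrow> y \<in> A \<Longrightarrow> \<rho> x < \<rho> y \<Longrightarrow> card {j\<in>A. \<rho> j < \<rho> x} < card {j\<in>A. \<rho> j < \<rho> y}"
    and "\<And>x. x \<in> A \<Longrightarrow> card {j\<in>A. \<rho> j < \<rho> x} < card A"
proof -
  fix x y assume x: "x \<in> A" and y: "y \<in> A" and xy: "\<rho> x < \<rho> y"
  have "{j\<in>A. \<rho> j < \<rho> x} \<subset> {j\<in>A. \<rho> j < \<rho> y}" using x xy by auto
  then show "card {j\<in>A. \<rho> j < \<rho> x} < card {j\<in>A. \<rho> j < \<rho> y}"
    using fin by (intro psubset_card_mono) auto
next
  fix x assume x: "x \<in> A"
  have "{j\<in>A. \<rho> j < \<rho> x} \<subset> A" using x by auto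
  then show "card {j\<in>A. \<rho> j < \<rho> x} < card A" using fin by (intro psubset_card_mono) auto
qed

definition rankL :: "nat \<Rightarrow> (nat \<Rightarrow> 'a set) \<Rightarrow> ('a \<Rightarrow> nat) \<Rightarrow> 'a option \<Rightarrow> nat" where
  "rankL K N \<rho> = (\<lambda>opt. case opt of None \<Rightarrow> card (all_states K N) + 1
      | Some i \<Rightarrow> card {j\<in>all_states K N. \<rho> j < \<rho> i} + 1)"

lemma rankL_props:
  assumes fin: "finite (all_states K N)" and inj: "inj_on \<rho> (all_states K N)"
  shows "labeling K N (rankL K N \<rho>)"
    and "\<And>x y. x \<in> all_states K N \<Longrightarrow> y \<in> all_states K N \<Longrightarrow>
           rankL K N \<rho> (Some x) < rankL K N \<rho> (Some y) \<longleftrightarrow> \<rho> x < \<rho> y"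
proof -
  let ?A = "all_states K N"
  let ?L = "rankL K N \<rho>"
  note rp = rank_props[OF fin inj]
  show lt: "?L (Some x) < ?L (Some y) \<longleftrightarrow> \<rho> x < \<rho> y" if x: "x \<in> ?A" and y: "y \<in> ?A" for x y
  proof
    assume "\<rho> x < \<rho> y" then show "?L (Some x) < ?L (Some y)" using rp(1)[OF x y] by (simp add: rankL_def)
  next
    assume a: "?L (Some x) < ?L (Some y)"
    show "\<rho> x < \<rho> y"
    proof (rule ccontr)
      assume "\<not> \<rho> x < \<rho> y"
      then have "\<rho> y < \<rho> x \<or> \<rho> y = \<rho> x" by auto
      then show False
      proof
        assume "\<rho> y < \<rho> x" then show False using rp(1)[OF y x] a by (simp add: rankL_def)
      next
        assume "\<rho> y = \<rho> x" then have "y = x" using inj x y by (meson inj_onD)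
        then show False using a by simp
      qed
    qed
  qed
  show "labeling K N ?L"
    unfolding labeling_def
  proof (intro conjI)
    show "inj_on ?L (insert None (Some ` ?A))"
    proof (rule inj_onI)
      fix a b assume a: "a \<in> insert None (Some ` ?A)" and b: "b \<in> insert None (Some ` ?A)" and e: "?L a = ?L b"
      show "a = b"
      proof (cases a)
        case None
        show ?thesis
        proof (cases b)
          case (Some y)
          then have yA: "y \<in> ?A" using b by auto
          then show ?thesis using e None Some rp(2)[OF yA] by (simp add: rankL_def)
        qed (use None in simp)
      next
        case (Some x)
        then have x: "x \<in> ?A" using a by auto
        show ?thesis
        proof (cases b)
          case None then show ?thesis using e Some rp(2)[OF x] by (simp add: rankL_def)
        next
          case (Some y)
          then have y: "y \<in> ?A" using b by auto
          have "\<not> ?L (Some x) < ?L (Some y)" "\<not> ?L (Some y) < ?L (Some x)"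
            using e \<open>a = Some x\<close> Some by auto
          then have "\<not> \<rho> x < \<rho> y" "\<not> \<rho> y < \<rho> x" using lt x y by auto
          then have "\<rho> x = \<rho> y" by simp
          then have "x = y" using inj x y by (meson inj_onD)
          then show ?thesis using \<open>a = Some x\<close> Some by simp
        qed
      qed
    qed
    show "?L ` insert None (Some ` ?A) \<subseteq> {1..card ?A + 1}"
      using rp(2) by (auto simp: rankL_def less_imp_le)
    show "?L None = card ?A + 1" by (simp add: rankL_def)
  qed
qed

lemma prule_prio:
  assumes "s \<in> multistates K N"
  shows "priority_rule K N L s = prio K (\<lambda>i. L (Some i)) s"
  using assms unfolding priority_rule_def prio_def by simp

lemma prio_cong:
  assumes h: "hyp K N q" and K1: "1 \<le> K" and s: "s \<in> multistates K N"
    and inj1: "inj_on \<rho>1 (all_states K N)"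
    and iff: "\<And>x y. x \<in> all_states K N \<Longrightarrow> y \<in> all_states K N \<Longrightarrow> \<rho>2 x < \<rho>2 y \<longleftrightarrow> \<rho>1 x < \<rho>1 y"
  shows "prio K \<rho>2 s = prio K \<rho>1 s"
proof -
  have pc: "prio K \<rho>1 s \<in> {1..K} \<and> (\<forall>k'\<in>{1..K}. k' \<noteq> prio K \<rho>1 s \<longrightarrow> \<rho>1 (s (prio K \<rho>1 s)) < \<rho>1 (s k'))"
    by (rule prio_char[OF hypD(3)[OF h] inj1 s K1])
  have inA: "\<And>k. k \<in> {1..K} \<Longrightarrow> s k \<in> all_states K N" using ms_comp[OF s] all_states_in by metis
  show ?thesis by (rule prio_eq) (use pc iff inA in auto)
qed

lemma labeling_inj: "labeling K N L \<Longrightarrow> inj_on (\<lambda>i. L (Some i)) (all_states K N)"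
  unfolding labeling_def inj_on_def by auto

lemma prule_policy:
  assumes h: "hyp K N q" and K1: "1 \<le> K" and L: "labeling K N L"
  shows "priority_rule K N L \<in> policies K N"
proof -
  have "\<forall>s\<in>multistates K N. priority_rule K N L s \<in> {1..K}"
    using prio_char[OF hypD(3)[OF h] labeling_inj[OF L] _ K1] prule_prio by metis
  then show ?thesis unfolding policies_def priority_rule_def by auto
qed

lemma bellman_opt2:
  assumes h: "hyp K N q"
    and pol: "\<forall>s\<in>multistates K N. \<delta> s \<in> {1..K}"
    and B: "\<forall>s\<in>multistates K N. \<forall>k\<in>{1..K}. g (s k) + (\<Sum>j\<in>N k. q (s k) j * V (s(k := j))) \<le> V s"
    and U: "\<forall>s\<in>multistates K N. U s = g (s (\<delta> s)) + (\<Sum>j\<in>N (\<delta> s). q (s (\<delta> s)) j * U (s(\<delta> s := j)))"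
  shows "\<forall>s\<in>multistates K N. U s \<le> V s"
proof -
  let ?M = "multistates K N"
  define D where "D s = V s - U s" for s
  have "\<forall>s\<in>?M. 0 \<le> D s"
  proof (rule minarg[OF h pol], intro ballI)
    fix s assume s: "s \<in> ?M"
    have "(\<Sum>j\<in>N (\<delta> s). q (s (\<delta> s)) j * D (s(\<delta> s := j)))
       = (\<Sum>j\<in>N (\<delta> s). q (s (\<delta> s)) j * V (s(\<delta> s := j))) - (\<Sum>j\<in>N (\<delta> s). q (s (\<delta> s)) j * U (s(\<delta> s := j)))"
      unfolding D_def by (simp add: algebra_simps sum_subtractf)
    also have "\<dots> \<le> D s" unfolding D_def using B[rule_format, OF s pol[rule_format, OF s]] U s by force
    finally show "(\<Sum>j\<in>N (\<delta> s). q (s (\<delta> s)) j * D (s(\<delta> s := j))) \<le> D s" .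
  qed
  then show ?thesis unfolding D_def by simp
qed

lemma lin_eq:
  assumes h: "hyp K N q"
    and pol: "\<forall>s\<in>multistates K N. \<delta> s \<in> {1..K}"
  shows "\<forall>s\<in>multistates K N. (\<Sum>w\<in>Ws. lam w * Vval K N q r w \<delta> s) =
      (\<Sum>w\<in>Ws. lam w * r w (s (\<delta> s))) + (\<Sum>j\<in>N (\<delta> s). q (s (\<delta> s)) j * (\<Sum>w\<in>Ws. lam w * Vval K N q r w \<delta> (s(\<delta> s := j))))"
proof
  fix s assume s: "s \<in> multistates K N"
  have "(\<Sum>w\<in>Ws. lam w * Vval K N q r w \<delta> s) = (\<Sum>w\<in>Ws. lam w * (r w (s (\<delta> s)) +
           (\<Sum>j\<in>N (\<delta> s). q (s (\<delta> s)) j * Vval K N q r w \<delta> (s(\<delta> s := j)))))"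
    using Vval_props[OF h pol] s by (intro sum.cong) auto
  also have "\<dots> = (\<Sum>w\<in>Ws. lam w * r w (s (\<delta> s))) + (\<Sum>w\<in>Ws. \<Sum>j\<in>N (\<delta> s). lam w * (q (s (\<delta> s)) j * Vval K N q r w \<delta> (s(\<delta> s := j))))"
    by (simp add: distrib_left sum.distrib sum_distrib_left)
  also have "(\<Sum>w\<in>Ws. \<Sum>j\<in>N (\<delta> s). lam w * (q (s (\<delta> s)) j * Vval K N q r w \<delta> (s(\<delta> s := j))))
      = (\<Sum>j\<in>N (\<delta> s). \<Sum>w\<in>Ws. lam w * (q (s (\<delta> s)) j * Vval K N q r w \<delta> (s(\<delta> s := j))))"
    by (rule sum.swap)
  also have "\<dots> = (\<Sum>j\<in>N (\<delta> s). q (s (\<delta> s)) j * (\<Sum>w\<in>Ws. lam w * Vval K N q r w \<delta> (s(\<delta> s := j))))"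
    by (simp add: sum_distrib_left mult.left_commute)
  finally show "(\<Sum>w\<in>Ws. lam w * Vval K N q r w \<delta> s) =
      (\<Sum>w\<in>Ws. lam w * r w (s (\<delta> s))) + (\<Sum>j\<in>N (\<delta> s). q (s (\<delta> s)) j * (\<Sum>w\<in>Ws. lam w * Vval K N q r w \<delta> (s(\<delta> s := j))))" .
qed

lemma dominance:
  assumes h: "hyp K N q" and K1: "1 \<le> K" and shat: "s_hat \<in> multistates K N"
    and \<delta>: "\<delta> \<in> policies K N"
  shows "\<exists>\<pi>\<in>priority_rules K N. (\<Sum>w\<in>Ws. lam w * Vval K N q r w \<delta> s_hat) \<le> (\<Sum>w\<in>Ws. lam w * Vval K N q r w \<pi> s_hat)"
proof -
  let ?M = "multistates K N"
  define g where "g i = (\<Sum>w\<in>Ws. lam w * r w i)" for i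
  obtain \<rho> V where inj: "inj_on \<rho> (all_states K N)"
    and eqV: "\<forall>s\<in>?M. V s = TT N q g V s (prio K \<rho> s)"
    and belV: "\<forall>s\<in>?M. \<forall>k\<in>{1..K}. TT N q g V s k \<le> V s"
    using gittins[OF h K1, of g] unfolding gitt_def by blast
  define L where "L = rankL K N \<rho>"
  note rl = rankL_props[OF finite_states[OF h] inj]
  have L: "labeling K N L" unfolding L_def by (rule rl(1))
  define \<pi> where "\<pi> = priority_rule K N L"
  have \<pi>P: "\<pi> \<in> priority_rules K N" unfolding \<pi>_def priority_rules_def using L by blast
  have \<pi>pol: "\<pi> \<in> policies K N" unfolding \<pi>_def by (rule prule_policy[OF h K1 L])
  have \<pi>eq: "\<pi> s = prio K \<rho> s" if s: "s \<in> ?M" for s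
    unfolding \<pi>_def prule_prio[OF s] L_def
    by (rule prio_cong[OF h K1 s inj]) (use rl(2) in blast)
  have polpi: "\<forall>s\<in>?M. \<pi> s \<in> {1..K}" using pol_in[OF \<pi>pol] by blast
  have poldelta: "\<forall>s\<in>?M. \<delta> s \<in> {1..K}" using pol_in[OF \<delta>] by blast
  have Vpi: "\<forall>s\<in>?M. V s = g (s (\<pi> s)) + (\<Sum>j\<in>N (\<pi> s). q (s (\<pi> s)) j * V (s(\<pi> s := j)))"
    using eqV \<pi>eq unfolding TT_def by simp
  have Upi: "\<forall>s\<in>?M. (\<Sum>w\<in>Ws. lam w * Vval K N q r w \<pi> s) = g (s (\<pi> s)) + (\<Sum>j\<in>N (\<pi> s). q (s (\<pi> s)) j * (\<Sum>w\<in>Ws. lam w * Vval K N q r w \<pi> (s(\<pi> s := j))))"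
    using lin_eq[OF h polpi] unfolding g_def by simp
  have Udelta: "\<forall>s\<in>?M. (\<Sum>w\<in>Ws. lam w * Vval K N q r w \<delta> s) = g (s (\<delta> s)) + (\<Sum>j\<in>N (\<delta> s). q (s (\<delta> s)) j * (\<Sum>w\<in>Ws. lam w * Vval K N q r w \<delta> (s(\<delta> s := j))))"
    using lin_eq[OF h poldelta] unfolding g_def by simp
  have e1: "\<forall>s\<in>?M. (\<Sum>w\<in>Ws. lam w * Vval K N q r w \<pi> s) = V s"
    by (rule eq_unique[OF h polpi Upi Vpi])
  have B: "\<forall>s\<in>?M. \<forall>k\<in>{1..K}. g (s k) + (\<Sum>j\<in>N k. q (s k) j * V (s(k := j))) \<le> V s"
    using belV unfolding TT_def by simp
  have e2: "\<forall>s\<in>?M. (\<Sum>w\<in>Ws. lam w * Vval K N q r w \<delta> s) \<le> V s"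
    by (rule bellman_opt2[OF h poldelta B Udelta])
  have "(\<Sum>w\<in>Ws. lam w * Vval K N q r w \<delta> s_hat) \<le> (\<Sum>w\<in>Ws. lam w * Vval K N q r w \<pi> s_hat)"
    using e1 e2 shat by metis
  then show ?thesis using \<pi>P by blast
qed

theorem proposition7p1:
  fixes K W :: nat and N :: "nat \<Rightarrow> 'a set" and q :: "'a \<Rightarrow> 'a \<Rightarrow> real"
    and r :: "nat \<Rightarrow> 'a \<Rightarrow> real" and C :: "nat \<Rightarrow> real" and s_hat :: "nat \<Rightarrow> 'a"
  assumes fin: "\<forall>k\<in>{1..K}. finite (N k) \<and> N k \<noteq> {}"
    and disj: "\<forall>k\<in>{1..K}. \<forall>k'\<in>{1..K}. k \<noteq> k' \<longrightarrow> N k \<inter> N k' = {}"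
    and nonneg: "\<forall>k\<in>{1..K}. \<forall>i\<in>N k. \<forall>j\<in>N k. 0 \<le> q i j"
    and transient: "\<forall>k\<in>{1..K}. transient_on (N k) q"
    and substoch: "\<forall>k\<in>{1..K}. substochastic_on (N k) q"
    and s_hat: "s_hat \<in> multistates K N"
    and W: "W \<ge> 1"
    and prog1: "\<exists>\<alpha>. (\<forall>\<delta>\<in>policies K N. 0 \<le> \<alpha> \<delta>) \<and> (\<Sum>\<delta>\<in>policies K N. \<alpha> \<delta>) = 1 \<and>
        (\<forall>w\<in>{1..W}. (\<Sum>\<delta>\<in>policies K N. \<alpha> \<delta> * Vval K N q r w \<delta> s_hat) \<ge> C w)"
  shows "\<exists>\<alpha>. (\<forall>\<pi>\<in>priority_rules K N. 0 \<le> \<alpha> \<pi>) \<and> (\<Sum>\<pi>\<in>priority_rules K N. \<alpha> \<pi>) = 1 \<and>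
        (\<forall>w\<in>{1..W}. (\<Sum>\<pi>\<in>priority_rules K N. \<alpha> \<pi> * Vval K N q r w \<pi> s_hat) \<ge> C w)"
proof -
  obtain \<alpha> where \<alpha>nn: "\<forall>\<delta>\<in>policies K N. 0 \<le> \<alpha> \<delta>" and \<alpha>1: "(\<Sum>\<delta>\<in>policies K N. \<alpha> \<delta>) = 1"
    and \<alpha>C: "\<forall>w\<in>{1..W}. (\<Sum>\<delta>\<in>policies K N. \<alpha> \<delta> * Vval K N q r w \<delta> s_hat) \<ge> C w"
    using prog1 by blast
  let ?M = "multistates K N" and ?Pol = "policies K N" and ?P = "priority_rules K N"
  have K1: "1 \<le> K"
  proof (rule ccontr)
    assume "\<not> 1 \<le> K"
    then have "{1..K} = {}" by simp
    then have "?Pol = {}" unfolding policies_def using s_hat by (auto simp: PiE_eq_empty_iff)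
    then show False using \<alpha>1 by simp
  qed
  have h: "hyp K N q"
    unfolding hyp_def
  proof (intro conjI)
    show "noclosed K N q" unfolding noclosed_def
    proof (intro ballI allI impI notI)
      fix k A assume k: "k \<in> {1..K}" and A: "A \<subseteq> N k" "A \<noteq> {}"
        and cl: "\<forall>x\<in>A. (\<Sum>j\<in>N k. q x j) = 1 \<and> (\<forall>j\<in>N k. 0 < q x j \<longrightarrow> j \<in> A)"
      show False
        by (rule transient_noclosed[of "N k" q A]) (use fin transient nonneg k A cl in auto)
    qed
  qed (use fin disj nonneg substoch in auto)
  have finPol: "finite ?Pol" unfolding policies_def
    using ms_finite[OF hypD(1)[OF h]] by (intro finite_PiE) auto
  have PsubPol: "?P \<subseteq> ?Pol" unfolding priority_rules_def using prule_policy[OF h K1] by blast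
  have finP: "finite ?P" using finite_subset[OF PsubPol finPol] .
  have neP: "?P \<noteq> {}"
  proof -
    obtain \<rho>0 :: "'a \<Rightarrow> nat" where "inj_on \<rho>0 (all_states K N)"
      using finite_imp_inj_to_nat_seg[OF finite_states[OF h]] by blast
    then have "labeling K N (rankL K N \<rho>0)" using rankL_props(1)[OF finite_states[OF h]] by blast
    then show ?thesis unfolding priority_rules_def by blast
  qed
  have conv: "\<forall>\<delta>\<in>?Pol. \<exists>\<beta>. (\<forall>\<pi>\<in>?P. 0 \<le> \<beta> \<pi>) \<and> sum \<beta> ?P = 1 \<and>
      (\<forall>w\<in>{1..W}. (\<Sum>\<pi>\<in>?P. \<beta> \<pi> * Vval K N q r w \<pi> s_hat) = Vval K N q r w \<delta> s_hat)"
  proof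
    fix \<delta> assume \<delta>: "\<delta> \<in> ?Pol"
    show "\<exists>\<beta>. (\<forall>\<pi>\<in>?P. 0 \<le> \<beta> \<pi>) \<and> sum \<beta> ?P = 1 \<and>
      (\<forall>w\<in>{1..W}. (\<Sum>\<pi>\<in>?P. \<beta> \<pi> * Vval K N q r w \<pi> s_hat) = Vval K N q r w \<delta> s_hat)"
      by (rule separation[OF finP neP finite_atLeastAtMost, where v="\<lambda>\<pi> w. Vval K N q r w \<pi> s_hat"
            and z="\<lambda>w. Vval K N q r w \<delta> s_hat", simplified])
         (rule dominance[OF h K1 s_hat \<delta>])
  qed
  then obtain B where B: "\<forall>\<delta>\<in>?Pol. (\<forall>\<pi>\<in>?P. 0 \<le> B \<delta> \<pi>) \<and> sum (B \<delta>) ?P = 1 \<and>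
      (\<forall>w\<in>{1..W}. (\<Sum>\<pi>\<in>?P. B \<delta> \<pi> * Vval K N q r w \<pi> s_hat) = Vval K N q r w \<delta> s_hat)"
    by (rule bchoice[elim_format]) blast
  define \<alpha>' where "\<alpha>' \<pi> = (\<Sum>\<delta>\<in>?Pol. \<alpha> \<delta> * B \<delta> \<pi>)" for \<pi>
  show ?thesis
  proof (intro exI[of _ \<alpha>'] conjI ballI)
    fix \<pi> assume "\<pi> \<in> ?P"
    then show "0 \<le> \<alpha>' \<pi>" unfolding \<alpha>'_def using \<alpha>nn B by (intro sum_nonneg mult_nonneg_nonneg) auto
  next
    have "(\<Sum>\<pi>\<in>?P. \<alpha>' \<pi>) = (\<Sum>\<delta>\<in>?Pol. \<Sum>\<pi>\<in>?P. \<alpha> \<delta> * B \<delta> \<pi>)"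
      unfolding \<alpha>'_def by (rule sum.swap)
    also have "\<dots> = (\<Sum>\<delta>\<in>?Pol. \<alpha> \<delta>)"
      using B by (intro sum.cong) (auto simp: sum_distrib_left[symmetric])
    finally show "(\<Sum>\<pi>\<in>?P. \<alpha>' \<pi>) = 1" using \<alpha>1 by simp
  next
    fix w assume w: "w \<in> {1..W}"
    have "(\<Sum>\<pi>\<in>?P. \<alpha>' \<pi> * Vval K N q r w \<pi> s_hat)
        = (\<Sum>\<pi>\<in>?P. \<Sum>\<delta>\<in>?Pol. \<alpha> \<delta> * (B \<delta> \<pi> * Vval K N q r w \<pi> s_hat))"
      unfolding \<alpha>'_def by (simp add: sum_distrib_right mult.assoc)
    also have "\<dots> = (\<Sum>\<delta>\<in>?Pol. \<Sum>\<pi>\<in>?P. \<alpha> \<delta> * (B \<delta> \<pi> * Vval K N q r w \<pi> s_hat))"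
      by (rule sum.swap)
    also have "\<dots> = (\<Sum>\<delta>\<in>?Pol. \<alpha> \<delta> * Vval K N q r w \<delta> s_hat)"
    proof (rule sum.cong[OF refl])
      fix \<delta> assume \<delta>: "\<delta> \<in> ?Pol"
      have "(\<Sum>\<pi>\<in>?P. \<alpha> \<delta> * (B \<delta> \<pi> * Vval K N q r w \<pi> s_hat)) = \<alpha> \<delta> * (\<Sum>\<pi>\<in>?P. B \<delta> \<pi> * Vval K N q r w \<pi> s_hat)"
        by (simp add: sum_distrib_left)
      also have "\<dots> = \<alpha> \<delta> * Vval K N q r w \<delta> s_hat" using B \<delta> w by simp
      finally show "(\<Sum>\<pi>\<in>?P. \<alpha> \<delta> * (B \<delta> \<pi> * Vval K N q r w \<pi> s_hat)) = \<alpha> \<delta> * Vval K N q r w \<delta> s_hat" .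
    qed
    finally show "C w \<le> (\<Sum>\<pi>\<in>?P. \<alpha>' \<pi> * Vval K N q r w \<pi> s_hat)" using \<alpha>C w by simp
  qed
qed

end
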